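(* Let $x(t)=Q(y(t))$, where $y(t)$ solves $\dot y_k=v_k(Q(y))$ for all $k\in\mathcal{N}$, and let $I$ be an open time interval over which the support of $x(t)$ remains constant. Then for all $t\in I$, all $k\in\mathcal{N}$ and all $\alpha\in\operatorname{supp}(x_k(t))$, $$\dot x_{k\alpha}=\sum_{\beta\in\operatorname{supp}(x_k)}\Big[g_k^{\alpha\beta}(x_k)-\frac{1}{G_k(x_k)}g_k^{\alpha}(x_k)g_k^{\beta}(x_k)\Big]v_{k\beta}(x).$$
   Context: Setting: a finite game with players $\mathcal{N}=\{1,\dots,N\}$, finite action sets $\mathcal{A}_k$, mixed strategy spaces $\mathcal{X}_k=\Delta(\mathcal{A}_k)$, $\mathcal{X}=\prod_k\mathcal{X}_k$, payoff vectors $v_k(x)=(u_k(\alpha;x_{-k}))_{\alpha\in\mathcal{A}_k}$ (with $u_k$ the multilinear expected payoff). Each player $k$ has a penalty function $h_k$ on $\mathcal{X}_k$: continuous, $C^\infty$ on the relative interior of every face of $\mathcal{X}_k$, and strongly convex (for some $K>0$ and norm $\|\cdot\|$, $h(tx_1+(1-t)x_2)\le th(x_1)+(1-t)h(x_2)-\tfrac12Kt(1-t)\|x_1-x_2\|^2$). Its choice map is $Q_k(y_k)=\arg\max_{x_k\in\mathcal{X}_k}\{\langle y_k,x_k\rangle-h_k(x_k)\}$, and $Q=(Q_1,\dots,Q_N)$. For $x_k$ with support $\mathcal{A}_k'$, $g_k^{\alpha\beta}(x_k)$, $\alpha,\beta\in\mathcal{A}_k'$, denotes the entries of the inverse of the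 Hessian matrix (in the coordinates $x_{k\alpha}$, $\alpha\in\mathcal{A}_k'$) of the restriction of $h_k$ to the face $\Delta(\mathcal{A}_k')$ of $\mathcal{X}_k$ (this Hessian is positive-definite by strong convexity); $g_k^\alpha(x_k)=\sum_{\beta\in\mathcal{A}_k'}g_k^{\alpha\beta}(x_k)$ and $G_k(x_k)=\sum_{\alpha\in\mathcal{A}_k'}g_k^\alpha(x_k)$. *)

theory Defs
  imports "HOL-Analysis.Analysis"
begin

text \<open>Conventions. Players form a finite type 'p (so the player set N is UNIV).
All players' actions live in a common finite type 'a; player k's action set is
A k (a nonempty subset). A mixed strategy of player k is a vector in real^'a
supported in A k. Pure payoffs: u k s for a pure profile s :: 'p => 'a.\<close>

definition mstrat :: "'a set \<Rightarrow> (real^'a::finite) set" where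
  "mstrat S = {z. (\<forall>a. 0 \<le> z $ a) \<and> (\<forall>a. a \<notin> S \<longrightarrow> z $ a = 0) \<and> (\<Sum>a\<in>S. z $ a) = 1}"

text \<open>Relative interior of the face Delta(S).\<close>
definition face_relint :: "'a set \<Rightarrow> (real^'a::finite) set" where
  "face_relint S = {z \<in> mstrat S. \<forall>a\<in>S. 0 < z $ a}"

text \<open>Coordinate subspace spanned by the coordinates in S.\<close>
definition coord_subspace :: "'a set \<Rightarrow> (real^'a::finite) set" where
  "coord_subspace S = {z. \<forall>a. a \<notin> S \<longrightarrow> z $ a = 0}"

definition supp :: "real^'a::finite \<Rightarrow> 'a set" where
  "supp z = {a. z $ a \<noteq> 0}"

text \<open>Payoff vector v_k(x): multilinear expected payoff of each pure action of k
against the mixed strategies x_{-k} of the other players (0 outside A k).\<close>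
definition payvec ::
  "('p::finite \<Rightarrow> ('p \<Rightarrow> 'a) \<Rightarrow> real) \<Rightarrow> ('p \<Rightarrow> 'a::finite set)
    \<Rightarrow> ('p \<Rightarrow> real^'a) \<Rightarrow> 'p \<Rightarrow> real^'a" where
  "payvec u A x k = (\<chi> a. \<Sum>s\<in>{s \<in> PiE UNIV A. s k = a}.
       (\<Prod>j\<in>UNIV - {k}. x j $ s j) * u k s)"

text \<open>Choice map Q_k(y_k) = argmax over X_k of <y_k,x_k> - h_k(x_k).\<close>
definition choice ::
  "('p \<Rightarrow> 'a::finite set) \<Rightarrow> ('p \<Rightarrow> real^'a \<Rightarrow> real) \<Rightarrow> 'p \<Rightarrow> real^'a \<Rightarrow> real^'a" where
  "choice A h k y = (SOME z. z \<in> mstrat (A k) \<and>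
      (\<forall>z'\<in>mstrat (A k). inner y z' - h k z' \<le> inner y z - h k z))"

definition is_norm :: "(real^'a::finite \<Rightarrow> real) \<Rightarrow> bool" where
  "is_norm n \<longleftrightarrow> (\<forall>z. 0 \<le> n z) \<and> (\<forall>z. n z = 0 \<longleftrightarrow> z = 0)
     \<and> (\<forall>c z. n (c *\<^sub>R z) = \<bar>c\<bar> * n z) \<and> (\<forall>z w. n (z + w) \<le> n z + n w)"

definition strongly_convex_on :: "(real^'a::finite) set \<Rightarrow> (real^'a \<Rightarrow> real) \<Rightarrow> bool" where
  "strongly_convex_on X f \<longleftrightarrow> (\<exists>K nrm. 0 < K \<and> is_norm nrm \<and>
     (\<forall>x1\<in>X. \<forall>x2\<in>X. \<forall>t\<in>{0..1}.
        f (t *\<^sub>R x1 + (1 - t) *\<^sub>R x2)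
          \<le> t * f x1 + (1 - t) * f x2 - 1/2 * K * t * (1 - t) * (nrm (x1 - x2))\<^sup>2))"

text \<open>Iterated partial derivatives (in coordinate directions).\<close>
fun iter_partial :: "'a list \<Rightarrow> (real^'a::finite \<Rightarrow> real) \<Rightarrow> real^'a \<Rightarrow> real" where
  "iter_partial [] f = f"
| "iter_partial (a # as) f = (\<lambda>z. deriv (\<lambda>t. iter_partial as f (z + t *\<^sub>R axis a 1)) 0)"

text \<open>f, viewed as a function of the coordinates in S only, is C-infinity on W:
all iterated partial derivatives in directions from S exist and are continuous.\<close>
definition smooth_coords_on :: "'a set \<Rightarrow> (real^'a::finite) set \<Rightarrow> (real^'a \<Rightarrow> real) \<Rightarrow> bool" where
  "smooth_coords_on S W f \<longleftrightarrow> (\<forall>as\<in>lists S. continuous_on W (iter_partial as f) \<and>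
      (\<forall>a\<in>S. \<forall>z\<in>W. (\<lambda>t. iter_partial as f (z + t *\<^sub>R axis a 1)) differentiable (at 0)))"

text \<open>h is C-infinity (in the coordinates x_a, a in S) on the relative interior of the
face Delta(S): smooth on a neighbourhood of it inside the coordinate subspace of S.\<close>
definition smooth_on_face_relint :: "'a set \<Rightarrow> (real^'a::finite \<Rightarrow> real) \<Rightarrow> bool" where
  "smooth_on_face_relint S f \<longleftrightarrow>
     (\<exists>U. open U \<and> face_relint S \<subseteq> U \<and> smooth_coords_on S (U \<inter> coord_subspace S) f)"

text \<open>Hessian entries in the coordinates x_a (a in the support).\<close>
definition hess :: "(real^'a::finite \<Rightarrow> real) \<Rightarrow> real^'a \<Rightarrow> 'a \<Rightarrow> 'a \<Rightarrow> real" where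
  "hess f z a b = iter_partial [a, b] f z"

definition pos_def_on :: "'a set \<Rightarrow> ('a \<Rightarrow> 'a \<Rightarrow> real) \<Rightarrow> bool" where
  "pos_def_on S H \<longleftrightarrow> (\<forall>w. (\<exists>a\<in>S. w a \<noteq> 0) \<longrightarrow> 0 < (\<Sum>a\<in>S. \<Sum>b\<in>S. w a * H a b * w b))"

text \<open>Inverse of the S-by-S matrix H (entries outside S x S set to 0).\<close>
definition inv_on :: "'a set \<Rightarrow> ('a \<Rightarrow> 'a \<Rightarrow> real) \<Rightarrow> 'a \<Rightarrow> 'a \<Rightarrow> real" where
  "inv_on S H = (THE M. (\<forall>a b. (a \<notin> S \<or> b \<notin> S) \<longrightarrow> M a b = 0) \<and>
      (\<forall>a\<in>S. \<forall>b\<in>S. (\<Sum>c\<in>S. H a c * M c b) = (if a = b then 1 else 0)))"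

text \<open>g^{ab}(x), g^a(x), G(x) for x with support supp x.\<close>
definition gmat :: "(real^'a::finite \<Rightarrow> real) \<Rightarrow> real^'a \<Rightarrow> 'a \<Rightarrow> 'a \<Rightarrow> real" where
  "gmat f z = inv_on (supp z) (hess f z)"

definition gvec :: "(real^'a::finite \<Rightarrow> real) \<Rightarrow> real^'a \<Rightarrow> 'a \<Rightarrow> real" where
  "gvec f z a = (\<Sum>b\<in>supp z. gmat f z a b)"

definition Gsum :: "(real^'a::finite \<Rightarrow> real) \<Rightarrow> real^'a \<Rightarrow> real" where
  "Gsum f z = (\<Sum>a\<in>supp z. gvec f z a)"

end

theory Submission
  imports Defs
begin


lemma line_deriv:
  fixes g :: "real^'a::finite \<Rightarrow> real"
  assumes d: "\<And>q. q \<in> W \<Longrightarrow> (\<lambda>\<tau>. g (q + \<tau> *\<^sub>R axis a 1)) differentiable (at 0)"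
    and p: "p + u *\<^sub>R axis a 1 \<in> W"
  shows "((\<lambda>\<tau>. g (p + \<tau> *\<^sub>R axis a 1)) has_real_derivative
           iter_partial [a] g (p + u *\<^sub>R axis a 1)) (at u)"
proof -
  define q where "q = p + u *\<^sub>R axis a 1"
  have "((\<lambda>\<tau>. g (q + \<tau> *\<^sub>R axis a 1)) has_real_derivative
           deriv (\<lambda>\<tau>. g (q + \<tau> *\<^sub>R axis a 1)) 0) (at 0)"
    using d[of q] p q_def DERIV_deriv_iff_real_differentiable by blast
  hence "((\<lambda>\<tau>. g (q + \<tau> *\<^sub>R axis a 1)) has_real_derivative
           iter_partial [a] g q) (at (u + -u))" by simp
  hence "((\<lambda>\<tau>. g (q + (\<tau> + - u) *\<^sub>R axis a 1)) has_real_derivative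
           iter_partial [a] g q) (at u)"
    using DERIV_shift[of "\<lambda>\<tau>. g (q + \<tau> *\<^sub>R axis a 1)" _ u "-u"] by simp
  thus ?thesis unfolding q_def by (simp add: algebra_simps)
qed

text \<open>MVT with derivative close to a constant.\<close>
lemma mvt_close:
  fixes \<phi> \<phi>' :: "real \<Rightarrow> real"
  assumes der: "\<And>u. \<bar>u\<bar> \<le> \<bar>r\<bar> \<Longrightarrow> (\<phi> has_real_derivative \<phi>' u) (at u)"
    and cl: "\<And>u. \<bar>u\<bar> \<le> \<bar>r\<bar> \<Longrightarrow> \<bar>\<phi>' u - c\<bar> \<le> e"
  shows "\<bar>\<phi> r - \<phi> 0 - r * c\<bar> \<le> e * \<bar>r\<bar>"
proof (cases "r = 0")
  case True thus ?thesis by simp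
next
  case False
  define lo where "lo = min 0 r"
  define hi where "hi = max 0 r"
  have "lo < hi" using False unfolding lo_def hi_def by auto
  then obtain z where z: "lo < z" "z < hi" "\<phi> hi - \<phi> lo = (hi - lo) * \<phi>' z"
  proof -
    have "\<And>x. lo \<le> x \<Longrightarrow> x \<le> hi \<Longrightarrow> (\<phi> has_real_derivative \<phi>' x) (at x)"
    proof -
      fix x assume "lo \<le> x" "x \<le> hi"
      hence "\<bar>x\<bar> \<le> \<bar>r\<bar>" unfolding lo_def hi_def by auto
      thus "(\<phi> has_real_derivative \<phi>' x) (at x)" by (rule der)
    qed
    thus ?thesis using MVT2[of lo hi \<phi> \<phi>'] \<open>lo < hi\<close> that by blast
  qed
  have zb: "\<bar>z\<bar> \<le> \<bar>r\<bar>" using z unfolding lo_def hi_def by auto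
  have "\<bar>\<phi> r - \<phi> 0 - r * c\<bar> = \<bar>r\<bar> * \<bar>\<phi>' z - c\<bar>"
  proof -
    have "\<phi> r - \<phi> 0 - r * c = r * (\<phi>' z - c)"
      using z(3) unfolding lo_def hi_def
      by (cases "r < 0") (auto simp: algebra_simps min_def max_def)
    thus ?thesis by (simp add: abs_mult)
  qed
  also have "\<dots> \<le> \<bar>r\<bar> * e" using cl[OF zb] by (simp add: mult_left_mono)
  finally show ?thesis by (simp add: mult.commute)
qed



lemma cont_bound_finite:
  fixes F :: "'b \<Rightarrow> real^'a::finite \<Rightarrow> real"
  assumes "finite S" "\<And>a. a \<in> S \<Longrightarrow> continuous_on W (F a)" "z \<in> W" "e > 0"
  shows "\<exists>d>0. \<forall>a\<in>S. \<forall>q\<in>W. dist q z < d \<longrightarrow> \<bar>F a q - F a z\<bar> \<le> e"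
proof -
  have "\<forall>a\<in>S. eventually (\<lambda>q. \<bar>F a q - F a z\<bar> < e) (at z within W)"
  proof
    fix a assume a: "a \<in> S"
    have "(F a \<longlongrightarrow> F a z) (at z within W)"
      using assms(2)[OF a] assms(3) continuous_on_def by blast
    hence "\<forall>\<epsilon>>0. eventually (\<lambda>q. dist (F a q) (F a z) < \<epsilon>) (at z within W)"
      by (simp only: tendsto_iff)
    thus "eventually (\<lambda>q. \<bar>F a q - F a z\<bar> < e) (at z within W)"
      using assms(4) by (simp add: dist_real_def)
  qed
  hence "eventually (\<lambda>q. \<forall>a\<in>S. \<bar>F a q - F a z\<bar> < e) (at z within W)"
    by (rule eventually_ball_finite[OF assms(1), where P="\<lambda>q a. \<bar>F a q - F a z\<bar> < e"])
  then obtain d where d: "d > 0" "\<forall>q\<in>W. q \<noteq> z \<and> dist q z < d \<longrightarrow> (\<forall>a\<in>S. \<bar>F a q - F a z\<bar> < e)"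
    unfolding eventually_at by blast
  show ?thesis
  proof (intro exI[of _ d] conjI ballI impI)
    show "d > 0" by (rule d(1))
    fix a q assume "a \<in> S" "q \<in> W" "dist q z < d"
    thus "\<bar>F a q - F a z\<bar> \<le> e" using d(2) assms(4) by (cases "q = z") (simp, fastforce)
  qed
qed

definition wT :: "'a set \<Rightarrow> real^'a::finite \<Rightarrow> real^'a" where
  "wT T w = (\<Sum>a\<in>T. (w $ a) *\<^sub>R axis a 1)"

lemma wT_nth: "finite T \<Longrightarrow> wT T w $ i = (if i \<in> T then w $ i else 0)"
  unfolding wT_def by (simp add: sum_component axis_def sum.If_cases if_distrib)

lemma wT_cs: "w \<in> coord_subspace S \<Longrightarrow> wT S (w::real^'a::finite) = w"
  by (simp add: vec_eq_iff wT_nth coord_subspace_def)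

lemma cs_add: "v \<in> coord_subspace S \<Longrightarrow> w \<in> coord_subspace S \<Longrightarrow> v + w \<in> coord_subspace S"
  by (simp add: coord_subspace_def)

lemma cs_scale: "v \<in> coord_subspace S \<Longrightarrow> c *\<^sub>R v \<in> coord_subspace S"
  by (simp add: coord_subspace_def)

lemma cs_axis: "a \<in> S \<Longrightarrow> axis a 1 \<in> coord_subspace S"
  by (auto simp: coord_subspace_def axis_def)

lemma wT_in_cs: "T \<subseteq> S \<Longrightarrow> wT T (w::real^'a::finite) \<in> coord_subspace S"
  by (auto simp: coord_subspace_def wT_nth)

lemma expansion:
  fixes g :: "real^'a::finite \<Rightarrow> real"
  assumes U: "open U" and z: "z \<in> U" "z \<in> coord_subspace S"
    and cont: "\<And>a. a \<in> S \<Longrightarrow> continuous_on (U \<inter> coord_subspace S) (iter_partial [a] g)"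
    and diff: "\<And>a q. a \<in> S \<Longrightarrow> q \<in> U \<inter> coord_subspace S \<Longrightarrow>
                  (\<lambda>\<tau>. g (q + \<tau> *\<^sub>R axis a 1)) differentiable (at 0)"
    and e: "e > 0"
  shows "\<exists>d>0. \<forall>w\<in>coord_subspace S. norm w < d \<longrightarrow>
           \<bar>g (z + w) - g z - (\<Sum>a\<in>S. w $ a * iter_partial [a] g z)\<bar> \<le> e * norm w"
proof -
  define W where "W = U \<inter> coord_subspace S"
  define e' where "e' = e / (real (card S) + 1)"
  have e': "e' > 0" using e by (simp add: e'_def)
  obtain d1 where d1: "d1 > 0" "\<forall>a\<in>S. \<forall>q\<in>W. dist q z < d1 \<longrightarrow>
        \<bar>iter_partial [a] g q - iter_partial [a] g z\<bar> \<le> e'"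
    using cont_bound_finite[of S W "\<lambda>a. iter_partial [a] g" z e'] cont z e' W_def by auto
  obtain d0 where d0: "d0 > 0" "ball z d0 \<subseteq> U" using U z openE by blast
  define d where "d = min d0 d1"
  have key: "\<And>T. finite T \<Longrightarrow> T \<subseteq> S \<Longrightarrow> \<forall>w\<in>coord_subspace S. norm w < d \<longrightarrow>
      \<bar>g (z + wT T w) - g z - (\<Sum>a\<in>T. w $ a * iter_partial [a] g z)\<bar> \<le> real (card T) * e' * norm w"
  proof -
    fix T :: "'a set" assume "finite T" "T \<subseteq> S"
    thus "\<forall>w\<in>coord_subspace S. norm w < d \<longrightarrow>
      \<bar>g (z + wT T w) - g z - (\<Sum>a\<in>T. w $ a * iter_partial [a] g z)\<bar> \<le> real (card T) * e' * norm w"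
    proof (induction T rule: finite_induct)
      case empty
      then show ?case by (simp add: wT_def)
    next
      case (insert b T)
      show ?case
      proof (intro ballI impI)
        fix w :: "real^'a" assume w: "w \<in> coord_subspace S" "norm w < d"
        have bS: "b \<in> S" and TS: "T \<subseteq> S" using insert by auto
        have IH: "\<bar>g (z + wT T w) - g z - (\<Sum>a\<in>T. w $ a * iter_partial [a] g z)\<bar>
                   \<le> real (card T) * e' * norm w" using insert w by auto
        define p where "p = z + wT T w"
        have pts: "p + u *\<^sub>R axis b 1 \<in> W \<and> dist (p + u *\<^sub>R axis b 1) z < d1"
          if u: "\<bar>u\<bar> \<le> \<bar>w $ b\<bar>" for u
        proof -
          have "norm (wT T w + u *\<^sub>R axis b 1) \<le> norm w"
          proof (rule norm_le_componentwise_cart)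
            fix i
            show "norm ((wT T w + u *\<^sub>R axis b 1) $ i) \<le> norm (w $ i)"
              using u insert.hyps(2) insert.hyps(1) by (auto simp: wT_nth axis_def)
          qed
          hence nl: "norm (wT T w + u *\<^sub>R axis b 1) < d" using w by simp
          have "p + u *\<^sub>R axis b 1 \<in> ball z d0"
          proof -
            have "dist z (z + (wT T w + u *\<^sub>R axis b 1)) = norm (wT T w + u *\<^sub>R axis b 1)"
              by (metis add.right_neutral dist_add_cancel dist_0_norm)
            thus ?thesis using nl unfolding p_def d_def by (simp add: add.assoc)
          qed
          moreover have "p + u *\<^sub>R axis b 1 \<in> coord_subspace S"
            unfolding p_def using z(2) wT_in_cs[OF TS] cs_axis[OF bS]
            by (intro cs_add cs_scale) auto
          moreover have "dist (p + u *\<^sub>R axis b 1) z < d1"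
            using nl unfolding p_def d_def by (simp add: dist_norm add.assoc)
          ultimately show ?thesis using d0 W_def by auto
        qed
        have step: "\<bar>g (p + (w $ b) *\<^sub>R axis b 1) - g (p + 0 *\<^sub>R axis b 1) - (w $ b) * iter_partial [b] g z\<bar>
                 \<le> e' * \<bar>w $ b\<bar>"
        proof (rule mvt_close[where \<phi>'="\<lambda>u. iter_partial [b] g (p + u *\<^sub>R axis b 1)"])
          fix u assume u: "\<bar>u\<bar> \<le> \<bar>w $ b\<bar>"
          show "((\<lambda>u. g (p + u *\<^sub>R axis b 1)) has_real_derivative iter_partial [b] g (p + u *\<^sub>R axis b 1)) (at u)"
            by (rule line_deriv[of W]) (use diff bS pts[OF u] W_def in auto)
          show "\<bar>iter_partial [b] g (p + u *\<^sub>R axis b 1) - iter_partial [b] g z\<bar> \<le> e'"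
            using d1(2) bS pts[OF u] by blast
        qed
        have wTi: "wT (insert b T) w = wT T w + (w $ b) *\<^sub>R axis b 1"
          unfolding wT_def using insert.hyps by simp
        have "\<bar>w $ b\<bar> \<le> norm w" by (rule component_le_norm_cart)
        hence "e' * \<bar>w $ b\<bar> \<le> e' * norm w" using e' by (simp add: mult_left_mono)
        hence step': "\<bar>g (p + (w $ b) *\<^sub>R axis b 1) - g p - (w $ b) * iter_partial [b] g z\<bar> \<le> e' * norm w"
          using step by simp
        have "\<bar>g (z + wT (insert b T) w) - g z - (\<Sum>a\<in>insert b T. w $ a * iter_partial [a] g z)\<bar>
           = \<bar>(g (p + (w $ b) *\<^sub>R axis b 1) - g p - (w $ b) * iter_partial [b] g z)
              + (g (z + wT T w) - g z - (\<Sum>a\<in>T. w $ a * iter_partial [a] g z))\<bar>"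
          using insert.hyps by (simp add: wTi p_def add.assoc)
        also have "\<dots> \<le> e' * norm w + real (card T) * e' * norm w"
          using step' IH by linarith
        also have "\<dots> = real (card (insert b T)) * e' * norm w"
          using insert.hyps by (simp add: algebra_simps)
        finally show "\<bar>g (z + wT (insert b T) w) - g z - (\<Sum>a\<in>insert b T. w $ a * iter_partial [a] g z)\<bar>
           \<le> real (card (insert b T)) * e' * norm w" .
      qed
    qed
  qed
  show ?thesis
  proof (intro exI[of _ d] conjI ballI impI)
    show "d > 0" using d0 d1 d_def by simp
    fix w :: "real^'a" assume w: "w \<in> coord_subspace S" "norm w < d"
    have "\<bar>g (z + w) - g z - (\<Sum>a\<in>S. w $ a * iter_partial [a] g z)\<bar> \<le> real (card S) * e' * norm w"
    proof -
      have "\<forall>w\<in>coord_subspace S. norm w < d \<longrightarrow>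
      \<bar>g (z + wT S w) - g z - (\<Sum>a\<in>S. w $ a * iter_partial [a] g z)\<bar> \<le> real (card S) * e' * norm w"
        by (rule key) auto
      hence "\<bar>g (z + wT S w) - g z - (\<Sum>a\<in>S. w $ a * iter_partial [a] g z)\<bar> \<le> real (card S) * e' * norm w"
        using w by blast
      thus ?thesis unfolding wT_cs[OF w(1)] .
    qed
    also have "\<dots> \<le> e * norm w"
    proof -
      have "real (card S) * e' \<le> e" using e unfolding e'_def by (simp add: field_simps)
      thus ?thesis by (simp add: mult_right_mono)
    qed
    finally show "\<bar>g (z + w) - g z - (\<Sum>a\<in>S. w $ a * iter_partial [a] g z)\<bar> \<le> e * norm w" .
  qed
qed



lemma mixed_mvt:
  fixes f :: "real^'a::finite \<Rightarrow> real"
  assumes sm: "smooth_coords_on S W f" and cS: "c \<in> S" and dS: "d \<in> S" and s: "s > 0"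
    and inW: "\<And>u v. 0 \<le> u \<Longrightarrow> u \<le> s \<Longrightarrow> 0 \<le> v \<Longrightarrow> v \<le> s \<Longrightarrow>
                  z + u *\<^sub>R axis c 1 + v *\<^sub>R axis d 1 \<in> W"
  shows "\<exists>\<xi> \<eta>. 0 < \<xi> \<and> \<xi> < s \<and> 0 < \<eta> \<and> \<eta> < s \<and>
     f (z + s *\<^sub>R axis c 1 + s *\<^sub>R axis d 1) - f (z + s *\<^sub>R axis c 1) - f (z + s *\<^sub>R axis d 1) + f z
      = s * s * iter_partial [d, c] f (z + \<xi> *\<^sub>R axis c 1 + \<eta> *\<^sub>R axis d 1)"
proof -
  let ?ec = "axis c 1 :: real^'a" and ?ed = "axis d 1 :: real^'a"
  have d0: "\<And>q. q \<in> W \<Longrightarrow> (\<lambda>\<tau>. f (q + \<tau> *\<^sub>R ?ec)) differentiable (at 0)"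
    using sm cS unfolding smooth_coords_on_def by (metis iter_partial.simps(1) lists.Nil)
  have d1: "\<And>q. q \<in> W \<Longrightarrow> (\<lambda>\<tau>. iter_partial [c] f (q + \<tau> *\<^sub>R ?ed)) differentiable (at 0)"
    using sm cS dS unfolding smooth_coords_on_def by (metis lists.Cons lists.Nil)
  define \<phi> where "\<phi> u = f (z + s *\<^sub>R ?ed + u *\<^sub>R ?ec) - f (z + u *\<^sub>R ?ec)" for u
  define \<phi>' where "\<phi>' u = iter_partial [c] f (z + s *\<^sub>R ?ed + u *\<^sub>R ?ec) - iter_partial [c] f (z + u *\<^sub>R ?ec)" for u
  have "\<exists>\<xi>. 0 < \<xi> \<and> \<xi> < s \<and> \<phi> s - \<phi> 0 = (s - 0) * \<phi>' \<xi>"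
  proof (rule MVT2[OF s])
    fix u :: real assume u: "0 \<le> u" "u \<le> s"
    have W1: "z + s *\<^sub>R ?ed + u *\<^sub>R ?ec \<in> W" using inW[of u s] u s by (simp add: algebra_simps)
    have W2: "z + u *\<^sub>R ?ec \<in> W" using inW[of u 0] u s by simp
    show "(\<phi> has_real_derivative \<phi>' u) (at u)"
      unfolding \<phi>_def[abs_def] \<phi>'_def
      by (intro DERIV_diff line_deriv[of W]) (use d0 W1 W2 in auto)
  qed
  then obtain \<xi> where xi: "0 < \<xi>" "\<xi> < s" "\<phi> s - \<phi> 0 = s * \<phi>' \<xi>" by auto
  define \<psi> where "\<psi> v = iter_partial [c] f (z + \<xi> *\<^sub>R ?ec + v *\<^sub>R ?ed)" for v
  have "\<exists>\<eta>. 0 < \<eta> \<and> \<eta> < s \<and> \<psi> s - \<psi> 0 = (s - 0) * iter_partial [d, c] f (z + \<xi> *\<^sub>R ?ec + \<eta> *\<^sub>R ?ed)"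
  proof (rule MVT2[OF s])
    fix v :: real assume v: "0 \<le> v" "v \<le> s"
    have W1: "z + \<xi> *\<^sub>R ?ec + v *\<^sub>R ?ed \<in> W" using inW[of \<xi> v] v xi by simp
    have "(\<psi> has_real_derivative iter_partial [d] (iter_partial [c] f) (z + \<xi> *\<^sub>R ?ec + v *\<^sub>R ?ed)) (at v)"
      unfolding \<psi>_def by (rule line_deriv[of W]) (use d1 W1 in auto)
    thus "(\<psi> has_real_derivative iter_partial [d, c] f (z + \<xi> *\<^sub>R ?ec + v *\<^sub>R ?ed)) (at v)" by simp
  qed
  then obtain \<eta> where eta: "0 < \<eta>" "\<eta> < s" "\<psi> s - \<psi> 0 = s * iter_partial [d, c] f (z + \<xi> *\<^sub>R ?ec + \<eta> *\<^sub>R ?ed)" by auto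
  have "\<phi>' \<xi> = \<psi> s - \<psi> 0" unfolding \<phi>'_def \<psi>_def by (simp add: algebra_simps)
  moreover have "\<phi> s - \<phi> 0 = f (z + s *\<^sub>R ?ec + s *\<^sub>R ?ed) - f (z + s *\<^sub>R ?ec) - f (z + s *\<^sub>R ?ed) + f z"
    unfolding \<phi>_def by (simp add: algebra_simps)
  ultimately show ?thesis using xi eta by (intro exI[of _ \<xi>] exI[of _ \<eta>]) auto
qed


lemma small_pt:
  fixes z :: "real^'a::finite"
  assumes "\<bar>u\<bar> \<le> s" "\<bar>v\<bar> \<le> s"
  shows "dist (z + u *\<^sub>R axis c 1 + v *\<^sub>R axis d 1) z \<le> 2 * s"
proof -
  have "dist (z + u *\<^sub>R axis c 1 + v *\<^sub>R axis d 1) z = norm (u *\<^sub>R axis c 1 + v *\<^sub>R (axis d 1 :: real^'a))"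
    by (simp add: dist_norm algebra_simps)
  also have "\<dots> \<le> norm (u *\<^sub>R (axis c 1::real^'a)) + norm (v *\<^sub>R (axis d 1::real^'a))"
    by (rule norm_triangle_ineq)
  also have "\<dots> = \<bar>u\<bar> + \<bar>v\<bar>" by (simp add: norm_axis_1)
  finally show ?thesis using assms by simp
qed

lemma schwarz:
  fixes f :: "real^'a::finite \<Rightarrow> real"
  assumes sm: "smooth_coords_on S (U \<inter> coord_subspace S) f" and U: "open U"
    and z: "z \<in> U" "z \<in> coord_subspace S" and aS: "a \<in> S" and bS: "b \<in> S"
  shows "iter_partial [a, b] f z = iter_partial [b, a] f z"
proof (rule ccontr)
  define W where "W = U \<inter> coord_subspace S"
  assume ne: "iter_partial [a, b] f z \<noteq> iter_partial [b, a] f z"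
  define D where "D = \<bar>iter_partial [a, b] f z - iter_partial [b, a] f z\<bar>"
  have D: "D > 0" using ne D_def by simp
  have cont: "\<And>as. as \<in> {[a,b],[b,a]} \<Longrightarrow> continuous_on W (iter_partial as f)"
    using sm aS bS unfolding smooth_coords_on_def W_def by auto
  obtain \<delta> where \<delta>: "\<delta> > 0" "\<forall>as\<in>{[a,b],[b,a]}. \<forall>q\<in>W. dist q z < \<delta> \<longrightarrow>
      \<bar>iter_partial as f q - iter_partial as f z\<bar> \<le> D / 3"
    using cont_bound_finite[of "{[a,b],[b,a]}" W "\<lambda>as. iter_partial as f" z "D/3"] cont z D W_def by auto
  obtain d0 where d0: "d0 > 0" "ball z d0 \<subseteq> U" using U z openE by blast
  define s where "s = min d0 \<delta> / 4"
  have s: "s > 0" using d0 \<delta> s_def by simp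
  have inW: "z + u *\<^sub>R axis c 1 + v *\<^sub>R axis d 1 \<in> W \<and> dist (z + u *\<^sub>R axis c 1 + v *\<^sub>R axis d 1) z < \<delta>"
    if "c \<in> S" "d \<in> S" "0 \<le> u" "u \<le> s" "0 \<le> v" "v \<le> s" for c d u v
  proof -
    have "dist (z + u *\<^sub>R axis c 1 + v *\<^sub>R axis d 1) z \<le> 2 * s"
      by (rule small_pt) (use that in auto)
    hence dd: "dist (z + u *\<^sub>R axis c 1 + v *\<^sub>R axis d 1) z < d0"
          "dist (z + u *\<^sub>R axis c 1 + v *\<^sub>R axis d 1) z < \<delta>"
      using s unfolding s_def by auto
    have "z + u *\<^sub>R axis c 1 + v *\<^sub>R axis d 1 \<in> U" using d0(2) dd(1) by (auto simp: dist_commute)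
    moreover have "z + u *\<^sub>R axis c 1 + v *\<^sub>R axis d 1 \<in> coord_subspace S"
      using z(2) cs_axis[OF that(1)] cs_axis[OF that(2)] by (intro cs_add cs_scale) auto
    ultimately show ?thesis using dd W_def by auto
  qed
  obtain \<xi>1 \<eta>1 where m1: "0 < \<xi>1" "\<xi>1 < s" "0 < \<eta>1" "\<eta>1 < s"
     "f (z + s *\<^sub>R axis a 1 + s *\<^sub>R axis b 1) - f (z + s *\<^sub>R axis a 1) - f (z + s *\<^sub>R axis b 1) + f z
      = s * s * iter_partial [b, a] f (z + \<xi>1 *\<^sub>R axis a 1 + \<eta>1 *\<^sub>R axis b 1)"
    using mixed_mvt[of S W f a b s z] sm aS bS s inW W_def by blast
  obtain \<xi>2 \<eta>2 where m2: "0 < \<xi>2" "\<xi>2 < s" "0 < \<eta>2" "\<eta>2 < s"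
     "f (z + s *\<^sub>R axis b 1 + s *\<^sub>R axis a 1) - f (z + s *\<^sub>R axis b 1) - f (z + s *\<^sub>R axis a 1) + f z
      = s * s * iter_partial [a, b] f (z + \<xi>2 *\<^sub>R axis b 1 + \<eta>2 *\<^sub>R axis a 1)"
    using mixed_mvt[of S W f b a s z] sm aS bS s inW W_def by blast
  have "z + s *\<^sub>R axis b 1 + s *\<^sub>R axis a 1 = z + s *\<^sub>R axis a 1 + s *\<^sub>R axis b 1" by (simp add: algebra_simps)
  hence "s * s * iter_partial [b, a] f (z + \<xi>1 *\<^sub>R axis a 1 + \<eta>1 *\<^sub>R axis b 1)
        = s * s * iter_partial [a, b] f (z + \<xi>2 *\<^sub>R axis b 1 + \<eta>2 *\<^sub>R axis a 1)"
  proof -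
    have "f (z + s *\<^sub>R axis b 1 + s *\<^sub>R axis a 1) = f (z + s *\<^sub>R axis a 1 + s *\<^sub>R axis b 1)"
      using \<open>z + s *\<^sub>R axis b 1 + s *\<^sub>R axis a 1 = _\<close> by (rule arg_cong)
    thus ?thesis using m1(5) m2(5) by linarith
  qed
  hence eq: "iter_partial [b, a] f (z + \<xi>1 *\<^sub>R axis a 1 + \<eta>1 *\<^sub>R axis b 1)
        = iter_partial [a, b] f (z + \<xi>2 *\<^sub>R axis b 1 + \<eta>2 *\<^sub>R axis a 1)" using s by simp
  have b1: "\<bar>iter_partial [b, a] f (z + \<xi>1 *\<^sub>R axis a 1 + \<eta>1 *\<^sub>R axis b 1) - iter_partial [b, a] f z\<bar> \<le> D / 3"
    using \<delta>(2) inW[of a b \<xi>1 \<eta>1] aS bS m1 by auto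
  have b2: "\<bar>iter_partial [a, b] f (z + \<xi>2 *\<^sub>R axis b 1 + \<eta>2 *\<^sub>R axis a 1) - iter_partial [a, b] f z\<bar> \<le> D / 3"
    using \<delta>(2) inW[of b a \<xi>2 \<eta>2] aS bS m2 by auto
  have "D \<le> 2 * D / 3" using b1 b2 eq unfolding D_def by linarith
  thus False using D by simp
qed



lemma is_normD:
  assumes "is_norm n"
  shows "n 0 = 0" "\<And>z. 0 \<le> n z" "\<And>c z. n (c *\<^sub>R z) = \<bar>c\<bar> * n z" "\<And>z w. n (z + w) \<le> n z + n w"
    "\<And>z. n z = 0 \<longleftrightarrow> z = 0"
  using assms unfolding is_norm_def by auto

lemma norm_sum_le:
  fixes n :: "real^'a::finite \<Rightarrow> real"
  assumes "is_norm n" "finite T"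
  shows "n (\<Sum>i\<in>T. f i) \<le> (\<Sum>i\<in>T. n (f i))"
  using assms(2)
proof (induction T rule: finite_induct)
  case empty then show ?case using is_normD(1)[OF assms(1)] by simp
next
  case (insert x F)
  then show ?case using is_normD(4)[OF assms(1), of "f x" "sum f F"] by simp
qed

lemma norm_upper:
  fixes n :: "real^'a::finite \<Rightarrow> real"
  assumes "is_norm n"
  shows "\<exists>B\<ge>0. \<forall>v. n v \<le> B * norm v"
proof -
  define B where "B = (\<Sum>i\<in>UNIV. n (axis i (1::real) :: real^'a))"
  have B0: "B \<ge> 0" unfolding B_def using is_normD(2)[OF assms] by (simp add: sum_nonneg)
  have "n v \<le> B * norm v" for v
  proof -
    have "v = (\<Sum>i\<in>UNIV. (v $ i) *\<^sub>R axis i 1)"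
      using basis_expansion[of v] by (simp add: scalar_mult_eq_scaleR)
    hence "n v = n (\<Sum>i\<in>UNIV. (v $ i) *\<^sub>R axis i 1)" by simp
    also have "\<dots> \<le> (\<Sum>i\<in>UNIV. n ((v $ i) *\<^sub>R axis i 1))" by (rule norm_sum_le[OF assms]) simp
    also have "\<dots> = (\<Sum>i\<in>UNIV. \<bar>v $ i\<bar> * n (axis i 1))" using is_normD(3)[OF assms] by simp
    also have "\<dots> \<le> (\<Sum>i\<in>UNIV. norm v * n (axis i 1))"
      by (rule sum_mono, rule mult_right_mono) (auto simp: component_le_norm_cart is_normD(2)[OF assms])
    also have "\<dots> = B * norm v" unfolding B_def by (simp add: sum_distrib_left mult.commute)
    finally show ?thesis .
  qed
  thus ?thesis using B0 by blast
qed

lemma norm_equiv_lower: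
  fixes n :: "real^'a::finite \<Rightarrow> real"
  assumes nn: "is_norm n"
  shows "\<exists>m>0. \<forall>v. m * norm v \<le> n v"
proof -
  obtain B where B: "B \<ge> 0" "\<And>v. n v \<le> B * norm v" using norm_upper[OF nn] by blast
  have lip: "\<bar>n v - n w\<bar> \<le> B * norm (v - w)" for v w
  proof -
    have "n v \<le> n (v - w) + n w" using is_normD(4)[OF nn, of "v - w" w] by simp
    moreover have "n w \<le> n (w - v) + n v" using is_normD(4)[OF nn, of "w - v" v] by simp
    moreover have "n (w - v) = n (v - w)"
      using is_normD(3)[OF nn, of "-1" "v - w"] by simp
    ultimately show ?thesis using B(2)[of "v - w"] by linarith
  qed
  have "continuous_on (sphere 0 1) n"
  proof (rule lipschitz_on_continuous_on)
    show "B-lipschitz_on (sphere 0 1) n"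
      by (rule lipschitz_onI) (use lip B(1) in \<open>auto simp: dist_norm dist_real_def\<close>)
  qed
  moreover have "sphere (0::real^'a) 1 \<noteq> {}"
    using norm_axis_1[of undefined] by (metis mem_sphere_0 sphere_empty zero_less_one not_less empty_iff)
  ultimately obtain v0 where v0: "v0 \<in> sphere 0 1" "\<And>v. v \<in> sphere 0 1 \<Longrightarrow> n v0 \<le> n v"
    using continuous_attains_inf[of "sphere (0::real^'a) 1" n] compact_sphere by blast
  have m: "n v0 > 0"
    using v0(1) is_normD(2,5)[OF nn, of v0] by (metis less_eq_real_def mem_sphere_0 norm_zero zero_neq_one)
  have "n v0 * norm v \<le> n v" for v
  proof (cases "v = 0")
    case True then show ?thesis using is_normD(1)[OF nn] by simp
  next
    case False
    hence "(1 / norm v) *\<^sub>R v \<in> sphere 0 1" by simp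
    hence "n v0 \<le> n ((1 / norm v) *\<^sub>R v)" by (rule v0(2))
    also have "\<dots> = n v / norm v" using is_normD(3)[OF nn] by simp
    finally show ?thesis using False by (simp add: field_simps)
  qed
  thus ?thesis using m by blast
qed



lemma pd_kernel:
  fixes H :: "'a \<Rightarrow> 'a \<Rightarrow> real"
  assumes pd: "pos_def_on S H" and fin: "finite S"
    and k: "\<And>a. a \<in> S \<Longrightarrow> (\<Sum>c\<in>S. H a c * w c) = 0"
  shows "\<forall>a\<in>S. w a = 0"
proof (rule ccontr)
  assume "\<not> (\<forall>a\<in>S. w a = 0)"
  hence "0 < (\<Sum>a\<in>S. \<Sum>b\<in>S. w a * H a b * w b)" using pd unfolding pos_def_on_def by blast
  also have "(\<Sum>a\<in>S. \<Sum>b\<in>S. w a * H a b * w b) = (\<Sum>a\<in>S. w a * (\<Sum>b\<in>S. H a b * w b))"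
    by (simp add: sum_distrib_left mult.assoc)
  also have "\<dots> = 0" using k by simp
  finally show False by simp
qed

lemma inv_on_exists:
  fixes H :: "'a::finite \<Rightarrow> 'a \<Rightarrow> real"
  assumes pd: "pos_def_on S H"
  shows "\<exists>M. (\<forall>a b. (a \<notin> S \<or> b \<notin> S) \<longrightarrow> M a b = 0) \<and>
      (\<forall>a\<in>S. \<forall>b\<in>S. (\<Sum>c\<in>S. H a c * M c b) = (if a = b then 1 else 0))"
proof -
  define A :: "real^'a^'a" where "A = (\<chi> i j. if i \<in> S then (if j \<in> S then H i j else 0) else (if i = j then 1 else 0))"
  have Av: "(A *v w) $ i = (if i \<in> S then (\<Sum>j\<in>S. H i j * w $ j) else w $ i)" for w i
  proof -
    have "(A *v w) $ i = (\<Sum>j\<in>UNIV. A $ i $ j * w $ j)" by (simp add: matrix_vector_mult_def)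
    also have "\<dots> = (if i \<in> S then (\<Sum>j\<in>S. H i j * w $ j) else w $ i)"
    proof (cases "i \<in> S")
      case True
      have "(\<Sum>j\<in>UNIV. A $ i $ j * w $ j) = (\<Sum>j\<in>UNIV. if j \<in> S then H i j * w $ j else 0)"
        by (rule sum.cong) (use True in \<open>auto simp: A_def\<close>)
      hence "(\<Sum>j\<in>UNIV. A $ i $ j * w $ j) = (\<Sum>j\<in>UNIV \<inter> S. H i j * w $ j)"
        using sum.inter_restrict[of UNIV "\<lambda>j. H i j * w $ j" S] by simp
      thus ?thesis using True by simp
    next
      case False
      have "(\<Sum>j\<in>UNIV. A $ i $ j * w $ j) = (\<Sum>j\<in>UNIV. if i = j then w $ j else 0)"
        by (rule sum.cong) (use False in \<open>auto simp: A_def\<close>)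
      thus ?thesis using False by simp
    qed
    finally show ?thesis .
  qed
  have lin: "linear ((*v) A)" by simp
  have "inj ((*v) A)"
  proof (rule linear_injective_0[THEN iffD2, OF lin], intro allI impI)
    fix w :: "real^'a" assume w0: "A *v w = 0"
    have "\<forall>a\<in>S. w $ a = 0"
      by (rule pd_kernel[OF pd, where w="\<lambda>j. w $ j"]) (use w0 Av in \<open>auto simp: vec_eq_iff\<close>, metis)
    moreover have "\<forall>a. a \<notin> S \<longrightarrow> w $ a = 0" using w0 Av by (metis vec_eq_iff zero_index)
    ultimately show "w = 0" by (metis vec_eq_iff zero_index)
  qed
  hence su: "surj ((*v) A)" using linear_injective_imp_surjective[OF lin] by blast
  define v where "v b = (SOME w. A *v w = axis b 1)" for b
  have v: "A *v v b = axis b 1" for b using su unfolding v_def by (metis (mono_tags) surjD someI)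
  define M where "M c b = (if c \<in> S \<and> b \<in> S then v b $ c else 0)" for c b
  show ?thesis
  proof (intro exI[of _ M] conjI allI impI ballI)
    fix a b assume "a \<notin> S \<or> b \<notin> S" thus "M a b = 0" unfolding M_def by auto
  next
    fix a b assume ab: "a \<in> S" "b \<in> S"
    have "(\<Sum>c\<in>S. H a c * M c b) = (\<Sum>c\<in>S. H a c * v b $ c)" unfolding M_def using ab by simp
    also have "\<dots> = (A *v v b) $ a" using Av ab by simp
    also have "\<dots> = (if a = b then 1 else 0)" using v by (simp add: axis_def)
    finally show "(\<Sum>c\<in>S. H a c * M c b) = (if a = b then 1 else 0)" .
  qed
qed

lemma inv_on_props:
  fixes H :: "'a::finite \<Rightarrow> 'a \<Rightarrow> real"
  assumes pd: "pos_def_on S H"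
  shows "\<forall>a b. (a \<notin> S \<or> b \<notin> S) \<longrightarrow> inv_on S H a b = 0"
    "\<forall>a\<in>S. \<forall>b\<in>S. (\<Sum>c\<in>S. H a c * inv_on S H c b) = (if a = b then 1 else 0)"
proof -
  let ?P = "\<lambda>M. (\<forall>a b. (a \<notin> S \<or> b \<notin> S) \<longrightarrow> M a b = 0) \<and>
      (\<forall>a\<in>S. \<forall>b\<in>S. (\<Sum>c\<in>S. H a c * M c b) = (if a = b then 1 else 0))"
  have "\<exists>!M. ?P M"
  proof (rule ex_ex1I)
    show "\<exists>M. ?P M" by (rule inv_on_exists[OF pd])
  next
    fix M M' assume PM: "?P M" and PM': "?P M'"
    show "M = M'"
    proof (intro ext)
      fix c b
      show "M c b = M' c b"
      proof (cases "b \<in> S \<and> c \<in> S")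
        case False thus ?thesis using PM PM' by auto
      next
        case True
        have "\<forall>a\<in>S. M a b - M' a b = 0"
        proof (rule pd_kernel[OF pd, where w="\<lambda>c. M c b - M' c b"])
          show "finite S" by simp
          fix a assume a: "a \<in> S"
          have "(\<Sum>c\<in>S. H a c * (M c b - M' c b)) = (\<Sum>c\<in>S. H a c * M c b) - (\<Sum>c\<in>S. H a c * M' c b)"
            by (simp add: algebra_simps sum_subtractf)
          thus "(\<Sum>c\<in>S. H a c * (M c b - M' c b)) = 0" using PM PM' a True by simp
        qed
        thus ?thesis using True by simp
      qed
    qed
  qed
  hence "?P (inv_on S H)" unfolding inv_on_def by (rule theI')
  thus "\<forall>a b. (a \<notin> S \<or> b \<notin> S) \<longrightarrow> inv_on S H a b = 0"
    "\<forall>a\<in>S. \<forall>b\<in>S. (\<Sum>c\<in>S. H a c * inv_on S H c b) = (if a = b then 1 else 0)" by auto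
qed


lemma delta_sum1: "b \<in> S \<Longrightarrow> finite S \<Longrightarrow> (\<Sum>c\<in>S. f c * (if c = b then 1 else 0)) = (f b :: real)"
  by (simp add: if_distrib cong: if_cong)

lemma delta_sum2: "b \<in> S \<Longrightarrow> finite S \<Longrightarrow> (\<Sum>c\<in>S. (if b = c then 1 else 0) * f c) = (f b :: real)"
proof -
  assume "b \<in> S" "finite S"
  have "(\<Sum>c\<in>S. (if b = c then 1 else 0) * f c) = (\<Sum>c\<in>S. if b = c then f c else 0)"
    by (rule sum.cong) auto
  thus ?thesis using \<open>b \<in> S\<close> \<open>finite S\<close> by simp
qed

lemma inv_on_sym:
  fixes H :: "'a::finite \<Rightarrow> 'a \<Rightarrow> real"
  assumes pd: "pos_def_on S H" and sym: "\<And>a b. a \<in> S \<Longrightarrow> b \<in> S \<Longrightarrow> H a b = H b a"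
    and a: "a \<in> S" and b: "b \<in> S"
  shows "inv_on S H a b = inv_on S H b a"
proof -
  define M where "M = inv_on S H"
  have R: "\<And>a b. a \<in> S \<Longrightarrow> b \<in> S \<Longrightarrow> (\<Sum>c\<in>S. H a c * M c b) = (if a = b then 1 else 0)"
    using inv_on_props(2)[OF pd] unfolding M_def by blast
  define T where "T = (\<Sum>c\<in>S. \<Sum>d\<in>S. M c a * H c d * M d b)"
  have "T = (\<Sum>c\<in>S. M c a * (\<Sum>d\<in>S. H c d * M d b))"
    unfolding T_def by (simp add: sum_distrib_left mult.assoc)
  also have "\<dots> = (\<Sum>c\<in>S. M c a * (if c = b then 1 else 0))"
    by (rule sum.cong) (use R b in auto)
  also have "\<dots> = M b a" using b by (simp add: delta_sum1)
  finally have T1: "T = M b a" .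
  have "T = (\<Sum>d\<in>S. (\<Sum>c\<in>S. H d c * M c a) * M d b)"
  proof -
    have "T = (\<Sum>d\<in>S. \<Sum>c\<in>S. M c a * H c d * M d b)" unfolding T_def by (rule sum.swap)
    also have "\<dots> = (\<Sum>d\<in>S. \<Sum>c\<in>S. H d c * M c a * M d b)"
      by (intro sum.cong refl) (simp add: sym)
    also have "\<dots> = (\<Sum>d\<in>S. (\<Sum>c\<in>S. H d c * M c a) * M d b)"
      by (simp add: sum_distrib_right)
    finally show ?thesis .
  qed
  also have "\<dots> = (\<Sum>d\<in>S. (if d = a then 1 else 0) * M d b)"
    by (rule sum.cong) (use R a in auto)
  also have "\<dots> = (\<Sum>d\<in>S. (if a = d then 1 else 0) * M d b)"
    by (rule sum.cong) auto
  also have "\<dots> = M a b" using a by (rule delta_sum2) simp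
  finally show ?thesis using T1 M_def by simp
qed

lemma rowsum_ident:
  fixes H :: "'a::finite \<Rightarrow> 'a \<Rightarrow> real"
  assumes pd: "pos_def_on S H" and a: "a \<in> S"
  shows "(\<Sum>c\<in>S. H a c * (\<Sum>b\<in>S. inv_on S H c b)) = 1"
proof -
  have R: "\<And>b. b \<in> S \<Longrightarrow> (\<Sum>c\<in>S. H a c * inv_on S H c b) = (if a = b then 1 else 0)"
    using inv_on_props(2)[OF pd] a by blast
  have "(\<Sum>c\<in>S. H a c * (\<Sum>b\<in>S. inv_on S H c b)) = (\<Sum>b\<in>S. \<Sum>c\<in>S. H a c * inv_on S H c b)"
    by (simp add: sum_distrib_left) (rule sum.swap)
  also have "\<dots> = (\<Sum>b\<in>S. (if a = b then 1 else 0))" by (rule sum.cong) (use R in auto)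
  also have "\<dots> = 1" using a by simp
  finally show ?thesis .
qed

lemma G_pos:
  fixes H :: "'a::finite \<Rightarrow> 'a \<Rightarrow> real"
  assumes pd: "pos_def_on S H" and ne: "S \<noteq> {}"
  shows "0 < (\<Sum>a\<in>S. \<Sum>b\<in>S. inv_on S H a b)"
proof -
  define w where "w c = (\<Sum>b\<in>S. inv_on S H c b)" for c
  have Hw: "\<And>a. a \<in> S \<Longrightarrow> (\<Sum>c\<in>S. H a c * w c) = 1" unfolding w_def by (rule rowsum_ident[OF pd])
  have "\<exists>a\<in>S. w a \<noteq> 0"
  proof (rule ccontr)
    assume "\<not> (\<exists>a\<in>S. w a \<noteq> 0)"
    hence "\<forall>c\<in>S. w c = 0" by simp
    moreover obtain a where "a \<in> S" using ne by blast
    ultimately show False using Hw[of a] by simp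
  qed
  hence "0 < (\<Sum>a\<in>S. \<Sum>b\<in>S. w a * H a b * w b)" using pd unfolding pos_def_on_def by blast
  also have "(\<Sum>a\<in>S. \<Sum>b\<in>S. w a * H a b * w b) = (\<Sum>a\<in>S. w a * (\<Sum>b\<in>S. H a b * w b))"
    by (simp add: sum_distrib_left mult.assoc)
  also have "\<dots> = (\<Sum>a\<in>S. w a)" using Hw by simp
  finally show ?thesis unfolding w_def .
qed



lemma mstrat_le1:
  assumes "z \<in> mstrat T" shows "z $ a \<le> (1::real)"
proof (cases "a \<in> T")
  case True
  have "z $ a \<le> (\<Sum>c\<in>T. z $ c)"
    by (rule member_le_sum) (use True assms in \<open>auto simp: mstrat_def\<close>)
  thus ?thesis using assms by (simp add: mstrat_def)
next
  case False thus ?thesis using assms by (simp add: mstrat_def)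
qed

lemma compact_mstrat: "compact (mstrat (T :: 'a::finite set))"
proof -
  have cl: "closed (mstrat T)"
  proof -
    have "mstrat T = (\<Inter>a. {z::real^'a. 0 \<le> z $ a}) \<inter> (\<Inter>a\<in>-T. {z. z $ a = 0}) \<inter> {z. (\<Sum>a\<in>T. z $ a) = 1}"
      unfolding mstrat_def by auto
    moreover have "closed {z::real^'a. (\<Sum>a\<in>T. z $ a) = 1}"
      by (intro closed_Collect_eq continuous_intros)
    moreover have "closed {z::real^'a. 0 \<le> z $ a}" for a
      by (intro closed_Collect_le continuous_intros)
    moreover have "closed {z::real^'a. z $ a = 0}" for a
      by (intro closed_Collect_eq continuous_intros)
    ultimately show ?thesis by (metis (no_types, lifting) closed_INT closed_Int)
  qed
  have "mstrat T \<subseteq> cbox 0 1"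
  proof
    fix z assume "z \<in> mstrat T"
    thus "z \<in> cbox 0 1" using mstrat_le1[of z T] by (auto simp: mem_box_cart mstrat_def)
  qed
  hence "bounded (mstrat T)" using bounded_cbox bounded_subset by blast
  thus ?thesis using cl compact_eq_bounded_closed by blast
qed

lemma axis_mstrat: "a \<in> T \<Longrightarrow> (axis a 1 :: real^'a::finite) \<in> mstrat T"
  by (auto simp: mstrat_def axis_def)

lemma choice_max:
  fixes h :: "'p \<Rightarrow> real^'a::finite \<Rightarrow> real"
  assumes ne: "A k \<noteq> {}" and hc: "continuous_on (mstrat (A k)) (h k)"
  shows "choice A h k yv \<in> mstrat (A k) \<and>
      (\<forall>z'\<in>mstrat (A k). inner yv z' - h k z' \<le> inner yv (choice A h k yv) - h k (choice A h k yv))"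
proof -
  have "continuous_on (mstrat (A k)) (\<lambda>z. inner yv z - h k z)"
    by (intro continuous_intros hc)
  moreover have "mstrat (A k) \<noteq> {}" using ne axis_mstrat by blast
  ultimately obtain z where "z \<in> mstrat (A k)" "\<forall>z'\<in>mstrat (A k). inner yv z' - h k z' \<le> inner yv z - h k z"
    using continuous_attains_sup[OF compact_mstrat] by blast
  hence ex: "\<exists>z. z \<in> mstrat (A k) \<and> (\<forall>z'\<in>mstrat (A k). inner yv z' - h k z' \<le> inner yv z - h k z)"
    by blast
  show ?thesis using someI_ex[OF ex] unfolding choice_def .
qed

lemma mid_mstrat:
  assumes "z1 \<in> mstrat T" "z2 \<in> mstrat T"
  shows "(1/2) *\<^sub>R z1 + (1 - 1/2) *\<^sub>R z2 \<in> mstrat T"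
  using assms by (auto simp: mstrat_def sum.distrib sum_divide_distrib[symmetric])

lemma argmax_lip:
  fixes f :: "real^'a::finite \<Rightarrow> real"
  assumes sc: "strongly_convex_on X f"
    and mid: "\<And>z1 z2. z1 \<in> X \<Longrightarrow> z2 \<in> X \<Longrightarrow> (1/2) *\<^sub>R z1 + (1 - 1/2) *\<^sub>R z2 \<in> X"
  shows "\<exists>C\<ge>0. \<forall>y1 y2 z1 z2. z1 \<in> X \<longrightarrow> z2 \<in> X \<longrightarrow>
     (\<forall>z\<in>X. inner y1 z - f z \<le> inner y1 z1 - f z1) \<longrightarrow>
     (\<forall>z\<in>X. inner y2 z - f z \<le> inner y2 z2 - f z2) \<longrightarrow> norm (z1 - z2) \<le> C * norm (y1 - y2)"
proof -
  obtain K nrm where K: "0 < K" "is_norm nrm" and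
    ineq: "\<forall>x1\<in>X. \<forall>x2\<in>X. \<forall>t\<in>{0..1}. f (t *\<^sub>R x1 + (1 - t) *\<^sub>R x2)
          \<le> t * f x1 + (1 - t) * f x2 - 1/2 * K * t * (1 - t) * (nrm (x1 - x2))\<^sup>2"
    using sc unfolding strongly_convex_on_def by blast
  obtain m where m: "m > 0" "\<And>v. m * norm v \<le> nrm v" using norm_equiv_lower[OF K(2)] by blast
  define C where "C = 2 / (K * m^2)"
  have C0: "C \<ge> 0" using K m unfolding C_def by simp
  show ?thesis
  proof (intro exI[of _ C] conjI allI impI C0)
    fix y1 y2 z1 z2 assume z: "z1 \<in> X" "z2 \<in> X"
      and o1: "\<forall>z\<in>X. inner y1 z - f z \<le> inner y1 z1 - f z1"
      and o2: "\<forall>z\<in>X. inner y2 z - f z \<le> inner y2 z2 - f z2"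
    define md where "md = (1/2) *\<^sub>R z1 + (1 - 1/2) *\<^sub>R z2"
    define N where "N = nrm (z1 - z2)"
    have md: "md \<in> X" using mid z md_def by simp
    have h12: "(1/2::real) \<in> {0..1}" by simp
    have fm: "f md \<le> 1/2 * f z1 + (1 - 1/2) * f z2 - 1/2 * K * (1/2) * (1 - 1/2) * N\<^sup>2"
      using ineq[rule_format, OF z(1) z(2) h12] unfolding md_def N_def .
    have "1/2 * K * (1/2) * (1 - 1/2) * N\<^sup>2 = K/8 * N\<^sup>2" by simp
    hence md2: "f md \<le> 1/2 * f z1 + 1/2 * f z2 - K/8 * N\<^sup>2"
      using fm by simp
    have "nrm (z2 - z1) = N"
      using is_normD(3)[OF K(2), of "-1" "z1 - z2"] unfolding N_def by simp
    have fm': "f md \<le> 1/2 * f z2 + 1/2 * f z1 - K/8 * N\<^sup>2" using md2 by simp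
    have i1: "inner y1 md = 1/2 * inner y1 z1 + 1/2 * inner y1 z2"
      unfolding md_def by (simp add: inner_add_right)
    have i2: "inner y2 md = 1/2 * inner y2 z1 + 1/2 * inner y2 z2"
      unfolding md_def by (simp add: inner_add_right)
    have "inner y1 md - f md \<le> inner y1 z1 - f z1" using o1 md by blast
    moreover have "inner y2 md - f md \<le> inner y2 z2 - f z2" using o2 md by blast
    ultimately have "K/2 * N\<^sup>2 \<le> inner y1 z1 - inner y1 z2 - inner y2 z1 + inner y2 z2"
      using i1 i2 md2 by linarith
    also have "\<dots> = inner (y1 - y2) (z1 - z2)" by (simp add: inner_diff_left inner_diff_right)
    also have "\<dots> \<le> norm (y1 - y2) * norm (z1 - z2)" by (rule norm_cauchy_schwarz)
    finally have A1: "K/2 * N\<^sup>2 \<le> norm (y1 - y2) * norm (z1 - z2)" .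
    have "m * norm (z1 - z2) \<le> N" using m(2) N_def by simp
    hence "(m * norm (z1 - z2))\<^sup>2 \<le> N\<^sup>2" using m by (intro power_mono) auto
    hence "K/2 * (m * norm (z1 - z2))\<^sup>2 \<le> norm (y1 - y2) * norm (z1 - z2)"
    proof -
      have "K/2 * (m * norm (z1 - z2))\<^sup>2 \<le> K/2 * N\<^sup>2"
        using \<open>(m * norm (z1 - z2))\<^sup>2 \<le> N\<^sup>2\<close> K by (intro mult_left_mono) auto
      thus ?thesis using A1 by linarith
    qed
    hence A2: "(K * m^2 / 2) * norm (z1 - z2) * norm (z1 - z2) \<le> norm (y1 - y2) * norm (z1 - z2)"
      by (simp add: power2_eq_square algebra_simps)
    show "norm (z1 - z2) \<le> C * norm (y1 - y2)"
    proof (cases "norm (z1 - z2) = 0")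
      case True thus ?thesis using C0 by simp
    next
      case False
      hence "(K * m^2 / 2) * norm (z1 - z2) \<le> norm (y1 - y2)"
        using A2 by (simp add: mult_le_cancel_right)
      hence "norm (z1 - z2) \<le> norm (y1 - y2) / (K * m^2 / 2)"
        using K m by (simp add: field_simps)
      also have "\<dots> \<le> C * norm (y1 - y2)" unfolding C_def using K m by (simp add: field_simps)
      finally show ?thesis .
    qed
  qed
qed



lemma face_relint_mstrat_sup:
  assumes z: "z \<in> face_relint S" and ST: "S \<subseteq> T"
  shows "z \<in> mstrat (T::'a::finite set)"
proof -
  have zS: "z \<in> mstrat S" using z by (simp add: face_relint_def)
  have "(\<Sum>a\<in>T. z $ a) = (\<Sum>a\<in>S. z $ a)"
    by (rule sum.mono_neutral_right) (use ST zS in \<open>auto simp: mstrat_def\<close>)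
  thus ?thesis using zS ST by (auto simp: mstrat_def)
qed

lemma face_relint_cs: "z \<in> face_relint S \<Longrightarrow> z \<in> coord_subspace S"
  by (simp add: face_relint_def mstrat_def coord_subspace_def)

lemma move_mstrat:
  fixes z :: "real^'a::finite"
  assumes z: "z \<in> face_relint S" and ST: "S \<subseteq> T" and a: "a \<in> S" and b: "b \<in> S" and ab: "a \<noteq> b"
    and t: "\<bar>\<tau>\<bar> \<le> z $ a / 2" "\<bar>\<tau>\<bar> \<le> z $ b / 2"
  shows "z + \<tau> *\<^sub>R (axis a 1 - axis b 1) \<in> mstrat T"
proof -
  have zT: "z \<in> mstrat T" by (rule face_relint_mstrat_sup[OF z ST])
  have pa: "z $ a > 0" "z $ b > 0" using z a b by (auto simp: face_relint_def)
  have comp: "(z + \<tau> *\<^sub>R (axis a 1 - axis b 1)) $ c = z $ c + (if c = a then \<tau> else 0) - (if c = b then \<tau> else 0)" for c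
    by (simp add: axis_def)
  have "(\<Sum>c\<in>T. (z + \<tau> *\<^sub>R (axis a 1 - axis b 1)) $ c)
      = (\<Sum>c\<in>T. z $ c) + (\<Sum>c\<in>T. (if c = a then \<tau> else 0)) - (\<Sum>c\<in>T. (if c = b then \<tau> else 0))"
    unfolding comp by (simp add: sum.distrib sum_subtractf)
  also have "\<dots> = 1" using zT a b ST by (auto simp: mstrat_def)
  finally have s1: "(\<Sum>c\<in>T. (z + \<tau> *\<^sub>R (axis a 1 - axis b 1)) $ c) = 1" .
  show ?thesis
    unfolding mstrat_def
  proof (intro CollectI conjI allI impI s1)
    fix c show "0 \<le> (z + \<tau> *\<^sub>R (axis a 1 - axis b 1)) $ c"
      unfolding comp using zT t pa ab by (auto simp: mstrat_def)
  next
    fix c assume "c \<notin> T"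
    thus "(z + \<tau> *\<^sub>R (axis a 1 - axis b 1)) $ c = 0"
      unfolding comp using zT a b ST by (auto simp: mstrat_def)
  qed
qed

lemma kkt:
  fixes f :: "real^'a::finite \<Rightarrow> real"
  assumes U: "open U" "face_relint S \<subseteq> U"
    and sm: "smooth_coords_on S (U \<inter> coord_subspace S) f"
    and ST: "S \<subseteq> T" and z: "z \<in> face_relint S"
    and opt: "\<forall>z'\<in>mstrat T. inner yv z' - f z' \<le> inner yv z - f z"
    and a: "a \<in> S" and b: "b \<in> S"
  shows "yv $ a - iter_partial [a] f z = yv $ b - iter_partial [b] f z"
proof (cases "a = b")
  case True thus ?thesis by simp
next
  case ab: False
  define D where "D = (yv $ a - yv $ b) - (iter_partial [a] f z - iter_partial [b] f z)"
  have cont: "\<And>c. c \<in> S \<Longrightarrow> continuous_on (U \<inter> coord_subspace S) (iter_partial [c] f)"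
    using sm unfolding smooth_coords_on_def by (metis lists.Cons lists.Nil)
  have diff: "\<And>c q. c \<in> S \<Longrightarrow> q \<in> U \<inter> coord_subspace S \<Longrightarrow> (\<lambda>\<tau>. f (q + \<tau> *\<^sub>R axis c 1)) differentiable (at 0)"
    using sm unfolding smooth_coords_on_def by (metis iter_partial.simps(1) lists.Nil)
  have zU: "z \<in> U" using z U by auto
  have zc: "z \<in> coord_subspace S" using z by (rule face_relint_cs)
  have pa: "z $ a > 0" "z $ b > 0" using z a b by (auto simp: face_relint_def)
  have bound: "\<bar>D\<bar> \<le> 2 * e" if e: "e > 0" for e
  proof -
    obtain d where d: "d > 0" "\<forall>w\<in>coord_subspace S. norm w < d \<longrightarrow>
           \<bar>f (z + w) - f z - (\<Sum>c\<in>S. w $ c * iter_partial [c] f z)\<bar> \<le> e * norm w"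
      using expansion[OF U(1) zU zc cont diff e] by blast
    define \<tau>0 where "\<tau>0 = min (d / 4) (min (z $ a) (z $ b) / 2)"
    have t0: "\<tau>0 > 0" using d pa unfolding \<tau>0_def by simp
    have step: "\<tau> * D \<le> 2 * e * \<bar>\<tau>\<bar>" if t: "\<bar>\<tau>\<bar> = \<tau>0" for \<tau>
    proof -
      define w where "w = \<tau> *\<^sub>R (axis a 1 - axis b 1 :: real^'a)"
      have wc: "w \<in> coord_subspace S" unfolding w_def using a b by (auto simp: coord_subspace_def axis_def)
      have nw: "norm w \<le> 2 * \<bar>\<tau>\<bar>"
      proof -
        have "norm (axis a 1 - axis b 1 :: real^'a) \<le> norm (axis a 1 :: real^'a) + norm (axis b 1 :: real^'a)"
          by (rule norm_triangle_ineq4)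
        hence "norm (axis a 1 - axis b 1 :: real^'a) \<le> 2" by simp
        hence "\<bar>\<tau>\<bar> * norm (axis a 1 - axis b 1 :: real^'a) \<le> \<bar>\<tau>\<bar> * 2" by (rule mult_left_mono) simp
        thus ?thesis unfolding w_def by (simp add: mult.commute)
      qed
      have "norm w < d" using nw t t0 unfolding \<tau>0_def by linarith
      hence ex: "\<bar>f (z + w) - f z - (\<Sum>c\<in>S. w $ c * iter_partial [c] f z)\<bar> \<le> e * norm w"
        using d wc by blast
      have sw: "(\<Sum>c\<in>S. w $ c * iter_partial [c] f z) = \<tau> * (iter_partial [a] f z - iter_partial [b] f z)"
      proof -
        define P where "P c = iter_partial [c] f z" for c
        have pw: "w $ c * P c = (if c = a then \<tau> * P a else 0) - (if c = b then \<tau> * P b else 0)" for c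
          unfolding w_def using ab by (auto simp: axis_def)
        have "(\<Sum>c\<in>S. w $ c * P c)
            = (\<Sum>c\<in>S. (if c = a then \<tau> * P a else 0)) - (\<Sum>c\<in>S. (if c = b then \<tau> * P b else 0))"
          unfolding pw by (simp add: sum_subtractf)
        also have "\<dots> = \<tau> * (P a - P b)" using a b by (simp add: algebra_simps)
        finally show ?thesis unfolding P_def .
      qed
      have iw: "inner yv w = \<tau> * (yv $ a - yv $ b)"
        unfolding w_def by (simp add: inner_diff_right inner_axis algebra_simps)
      have mem: "z + w \<in> mstrat T" unfolding w_def
        by (rule move_mstrat[OF z ST a b ab]) (use t in \<open>auto simp: \<tau>0_def\<close>)
      have "inner yv (z + w) - f (z + w) \<le> inner yv z - f z" using opt mem by blast
      hence "\<tau> * (yv $ a - yv $ b) \<le> f (z + w) - f z" using iw by (simp add: inner_add_right)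
      moreover have "e * norm w \<le> e * (2 * \<bar>\<tau>\<bar>)" using e nw by (simp add: mult_left_mono)
      ultimately show ?thesis using ex sw unfolding D_def by (simp add: algebra_simps)
    qed
    have "\<tau>0 * D \<le> 2 * e * \<tau>0" using step[of \<tau>0] t0 by simp
    hence "D \<le> 2 * e" using t0 by (simp add: mult.commute)
    moreover have "(- \<tau>0) * D \<le> 2 * e * \<tau>0" using step[of "-\<tau>0"] t0 by simp
    hence "\<tau>0 * (- D) \<le> \<tau>0 * (2 * e)" by (simp add: algebra_simps)
    hence "- D \<le> 2 * e" using t0 by (meson mult_le_cancel_left_pos)
    ultimately show ?thesis by simp
  qed
  have "D = 0"
  proof (rule ccontr)
    assume "D \<noteq> 0"
    hence "\<bar>D\<bar> \<le> 2 * (\<bar>D\<bar> / 4)" using bound[of "\<bar>D\<bar>/4"] by simp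
    thus False using \<open>D \<noteq> 0\<close> by simp
  qed
  thus ?thesis unfolding D_def by simp
qed



lemma algebra_key:
  fixes H :: "'a::finite \<Rightarrow> 'a \<Rightarrow> real"
  assumes pd: "pos_def_on S H" and sym: "\<And>a b. a \<in> S \<Longrightarrow> b \<in> S \<Longrightarrow> H a b = H b a"
    and al: "\<alpha> \<in> S"
    and dx0: "(\<Sum>a\<in>S. dx a) = 0"
    and q: "\<And>b. b \<in> S \<Longrightarrow> (\<Sum>a\<in>S. dx a * H a b) = q b"
  defines "gv \<equiv> \<lambda>a. \<Sum>b\<in>S. inv_on S H a b"
  defines "G \<equiv> \<Sum>a\<in>S. gv a"
  shows "dx \<alpha> = (\<Sum>\<beta>\<in>S. (inv_on S H \<alpha> \<beta> - gv \<alpha> * gv \<beta> / G) * q \<beta>)"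
    and "(\<Sum>\<beta>\<in>S. (inv_on S H \<alpha> \<beta> - gv \<alpha> * gv \<beta> / G)) = 0"
proof -
  define M where "M = inv_on S H"
  have R: "\<And>a b. a \<in> S \<Longrightarrow> b \<in> S \<Longrightarrow> (\<Sum>c\<in>S. H a c * M c b) = (if a = b then 1 else 0)"
    using inv_on_props(2)[OF pd] unfolding M_def by blast
  have Msym: "\<And>a b. a \<in> S \<Longrightarrow> b \<in> S \<Longrightarrow> M a b = M b a"
    unfolding M_def by (rule inv_on_sym[OF pd sym]) auto
  have Sne: "S \<noteq> {}" using al by auto
  have Gp: "G > 0" unfolding G_def gv_def using G_pos[OF pd Sne] by simp
  have row: "\<And>a. a \<in> S \<Longrightarrow> (\<Sum>c\<in>S. H a c * gv c) = 1"
    unfolding gv_def by (rule rowsum_ident[OF pd])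
  define P where "P \<beta> = M \<alpha> \<beta> - gv \<alpha> * gv \<beta> / G" for \<beta>
  have PH: "(\<Sum>\<beta>\<in>S. P \<beta> * H a \<beta>) = (if a = \<alpha> then 1 else 0) - gv \<alpha> / G" if a: "a \<in> S" for a
  proof -
    have "(\<Sum>\<beta>\<in>S. P \<beta> * H a \<beta>) = (\<Sum>\<beta>\<in>S. H a \<beta> * M \<beta> \<alpha>) - gv \<alpha> / G * (\<Sum>\<beta>\<in>S. H a \<beta> * gv \<beta>)"
      unfolding P_def
      by (simp add: algebra_simps sum_subtractf sum_distrib_left sum_divide_distrib Msym[OF al] cong: sum.cong)
    also have "\<dots> = (if a = \<alpha> then 1 else 0) - gv \<alpha> / G" using R[OF a al] row[OF a] by simp
    finally show ?thesis .
  qed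
  have "(\<Sum>\<beta>\<in>S. P \<beta> * q \<beta>) = (\<Sum>\<beta>\<in>S. P \<beta> * (\<Sum>a\<in>S. dx a * H a \<beta>))"
    using q by simp
  also have "\<dots> = (\<Sum>a\<in>S. dx a * (\<Sum>\<beta>\<in>S. P \<beta> * H a \<beta>))"
    by (simp add: sum_distrib_left algebra_simps) (rule sum.swap)
  also have "\<dots> = (\<Sum>a\<in>S. dx a * (if a = \<alpha> then 1 else 0)) - gv \<alpha> / G * (\<Sum>a\<in>S. dx a)"
    by (simp add: PH algebra_simps sum_subtractf sum_distrib_left sum_divide_distrib cong: sum.cong)
  also have "\<dots> = dx \<alpha>" using al dx0 by (simp add: delta_sum1)
  finally show "dx \<alpha> = (\<Sum>\<beta>\<in>S. (inv_on S H \<alpha> \<beta> - gv \<alpha> * gv \<beta> / G) * q \<beta>)"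
    unfolding P_def M_def by simp
  have "(\<Sum>\<beta>\<in>S. P \<beta>) = gv \<alpha> - gv \<alpha> * G / G"
    unfolding P_def by (simp add: sum_subtractf sum_divide_distrib[symmetric] sum_distrib_left[symmetric] gv_def G_def M_def)
  also have "\<dots> = 0" using Gp by simp
  finally show "(\<Sum>\<beta>\<in>S. (inv_on S H \<alpha> \<beta> - gv \<alpha> * gv \<beta> / G)) = 0" unfolding P_def M_def .
qed

lemma vec_deriv_eventually:
  fixes F :: "real \<Rightarrow> 'b::real_normed_vector"
  assumes d: "(F has_vector_derivative V) (at t0)" and e: "e > 0"
  shows "eventually (\<lambda>s. norm (F s - F t0 - (s - t0) *\<^sub>R V) \<le> e * \<bar>s - t0\<bar>) (at t0)"
proof -
  have "((\<lambda>s. norm (F s - F t0 - (s - t0) *\<^sub>R V) / norm (s - t0)) \<longlongrightarrow> 0) (at t0)"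
    using d unfolding has_vector_derivative_def has_derivative_iff_norm by blast
  hence "eventually (\<lambda>s. dist (norm (F s - F t0 - (s - t0) *\<^sub>R V) / norm (s - t0)) 0 < e) (at t0)"
    using e by (simp only: tendsto_iff)
  moreover have "eventually (\<lambda>s. s \<noteq> t0) (at t0)" by (simp add: eventually_at_filter)
  ultimately show ?thesis
  proof (rule eventually_elim2)
    fix s assume a: "dist (norm (F s - F t0 - (s - t0) *\<^sub>R V) / norm (s - t0)) 0 < e" and b: "s \<noteq> t0"
    hence "norm (F s - F t0 - (s - t0) *\<^sub>R V) / \<bar>s - t0\<bar> < e" by simp
    thus "norm (F s - F t0 - (s - t0) *\<^sub>R V) \<le> e * \<bar>s - t0\<bar>" using b by (simp add: field_simps)
  qed
qed

lemma sum_bound: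
  fixes P z :: "'a \<Rightarrow> real"
  assumes "\<And>b. b \<in> S \<Longrightarrow> \<bar>z b\<bar> \<le> B"
  shows "\<bar>\<Sum>b\<in>S. P b * z b\<bar> \<le> (\<Sum>b\<in>S. \<bar>P b\<bar>) * B"
proof -
  have "\<bar>\<Sum>b\<in>S. P b * z b\<bar> \<le> (\<Sum>b\<in>S. \<bar>P b * z b\<bar>)" by (rule sum_abs)
  also have "\<dots> \<le> (\<Sum>b\<in>S. \<bar>P b\<bar> * B)"
    by (rule sum_mono) (use assms in \<open>auto simp: abs_mult intro: mult_left_mono\<close>)
  also have "\<dots> = (\<Sum>b\<in>S. \<bar>P b\<bar>) * B" by (simp add: sum_distrib_right)
  finally show ?thesis .
qed



theorem proposition3p2:
  fixes A :: "'p::finite \<Rightarrow> 'a::finite set"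
    and u :: "'p \<Rightarrow> ('p \<Rightarrow> 'a) \<Rightarrow> real"
    and h :: "'p \<Rightarrow> real^'a \<Rightarrow> real"
    and y :: "real \<Rightarrow> 'p \<Rightarrow> real^'a"
    and x :: "real \<Rightarrow> 'p \<Rightarrow> real^'a"
    and I :: "real set"
  assumes A_ne: "\<And>k. A k \<noteq> {}"
    and h_cont: "\<And>k. continuous_on (mstrat (A k)) (h k)"
    and h_smooth: "\<And>k S. S \<subseteq> A k \<Longrightarrow> S \<noteq> {} \<Longrightarrow> smooth_on_face_relint S (h k)"
    and h_sconv: "\<And>k. strongly_convex_on (mstrat (A k)) (h k)"
    and h_hess_pd: "\<And>k S z. S \<subseteq> A k \<Longrightarrow> S \<noteq> {} \<Longrightarrow> z \<in> face_relint S \<Longrightarrow>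
                       pos_def_on S (hess (h k) z)"
    and x_def: "\<And>t k. x t k = choice A h k (y t k)"
    and I_open: "open I" and I_interval: "is_interval I"
    and y_sol: "\<And>t k. t \<in> I \<Longrightarrow>
                 ((\<lambda>s. y s k) has_vector_derivative payvec u A (x t) k) (at t)"
    and supp_const: "\<And>t s k. t \<in> I \<Longrightarrow> s \<in> I \<Longrightarrow> supp (x t k) = supp (x s k)"
  shows "\<forall>t\<in>I. \<forall>k. \<forall>\<alpha>\<in>supp (x t k).
           ((\<lambda>s. x s k $ \<alpha>) has_real_derivative
              (\<Sum>\<beta>\<in>supp (x t k).
                 (gmat (h k) (x t k) \<alpha> \<beta>
                   - gvec (h k) (x t k) \<alpha> * gvec (h k) (x t k) \<beta> / Gsum (h k) (x t k))
                 * payvec u A (x t) k $ \<beta>)) (at t)"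
proof (intro ballI allI)
  fix t0 k \<alpha>
  assume t0: "t0 \<in> I" and al0: "\<alpha> \<in> supp (x t0 k)"
  define S where "S = supp (x t0 k)"
  define f where "f = h k"
  define X where "X s = x s k" for s
  define Y where "Y s = y s k" for s
  define V where "V = payvec u A (x t0) k"
  define z0 where "z0 = x t0 k"
  have Xt0: "X t0 = z0" unfolding X_def z0_def ..
  have al: "\<alpha> \<in> S" using al0 S_def by simp
  have opt: "X s \<in> mstrat (A k) \<and> (\<forall>z'\<in>mstrat (A k). inner (Y s) z' - f z' \<le> inner (Y s) (X s) - f (X s))" for s
    unfolding X_def Y_def f_def x_def by (rule choice_max[of A k h, OF A_ne h_cont])
  have suppX: "supp (X s) = S" if "s \<in> I" for s unfolding X_def S_def using supp_const t0 that by blast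
  have SA: "S \<subseteq> A k"
  proof
    fix c assume "c \<in> S"
    hence "X t0 $ c \<noteq> 0" using suppX[OF t0] by (auto simp: supp_def)
    thus "c \<in> A k" using opt[of t0] by (auto simp: mstrat_def)
  qed
  have fr: "X s \<in> face_relint S" if s: "s \<in> I" for s
  proof -
    have m: "X s \<in> mstrat (A k)" using opt by blast
    have zz: "\<forall>c. c \<notin> S \<longrightarrow> X s $ c = 0" using suppX[OF s] by (auto simp: supp_def)
    have "(\<Sum>c\<in>A k. X s $ c) = (\<Sum>c\<in>S. X s $ c)"
      by (rule sum.mono_neutral_right) (use SA zz in auto)
    hence sum1: "(\<Sum>c\<in>S. X s $ c) = 1" using m by (simp add: mstrat_def)
    have pos: "\<forall>c\<in>S. 0 < X s $ c"
    proof
      fix c assume "c \<in> S"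
      hence "X s $ c \<noteq> 0" using suppX[OF s] by (auto simp: supp_def)
      moreover have "X s $ c \<ge> 0" using m by (simp add: mstrat_def)
      ultimately show "0 < X s $ c" by simp
    qed
    show ?thesis using m zz sum1 pos by (auto simp: face_relint_def mstrat_def)
  qed
  have Sne: "S \<noteq> {}" using al by auto
  obtain U where U: "open U" "face_relint S \<subseteq> U" and sm: "smooth_coords_on S (U \<inter> coord_subspace S) f"
    using h_smooth[OF SA Sne] unfolding smooth_on_face_relint_def f_def by blast
  have z0fr: "z0 \<in> face_relint S" using fr[OF t0] Xt0 by simp
  have z0U: "z0 \<in> U" using U z0fr by auto
  have z0c: "z0 \<in> coord_subspace S" using z0fr by (rule face_relint_cs)
  define Hm where "Hm = hess f z0"
  have pd: "pos_def_on S Hm" unfolding Hm_def f_def using h_hess_pd[OF SA Sne z0fr] .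
  have Hsym: "\<And>a b. a \<in> S \<Longrightarrow> b \<in> S \<Longrightarrow> Hm a b = Hm b a"
    unfolding Hm_def hess_def using schwarz[OF sm U(1) z0U z0c] by blast
  define gv where "gv a = (\<Sum>b\<in>S. inv_on S Hm a b)" for a
  define G where "G = (\<Sum>a\<in>S. gv a)"
  define P where "P \<beta> = inv_on S Hm \<alpha> \<beta> - gv \<alpha> * gv \<beta> / G" for \<beta>
  define D where "D = (\<Sum>\<beta>\<in>S. P \<beta> * V $ \<beta>)"
  have goal_eq: "(\<Sum>\<beta>\<in>supp (x t0 k).
                 (gmat (h k) (x t0 k) \<alpha> \<beta>
                   - gvec (h k) (x t0 k) \<alpha> * gvec (h k) (x t0 k) \<beta> / Gsum (h k) (x t0 k))
                 * payvec u A (x t0) k $ \<beta>) = D"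
    unfolding gvec_def Gsum_def gmat_def S_def[symmetric] f_def[symmetric] z0_def[symmetric]
      V_def[symmetric] Hm_def[symmetric] D_def P_def gv_def G_def
    using S_def z0_def by simp
  have Yd: "(Y has_vector_derivative V) (at t0)" unfolding Y_def V_def using y_sol[OF t0] .
  obtain C where C: "C \<ge> 0" and Cl: "\<forall>y1 y2 z1 z2. z1 \<in> mstrat (A k) \<longrightarrow> z2 \<in> mstrat (A k) \<longrightarrow>
     (\<forall>z\<in>mstrat (A k). inner y1 z - f z \<le> inner y1 z1 - f z1) \<longrightarrow>
     (\<forall>z\<in>mstrat (A k). inner y2 z - f z \<le> inner y2 z2 - f z2) \<longrightarrow> norm (z1 - z2) \<le> C * norm (y1 - y2)"
    using argmax_lip[OF h_sconv[of k] mid_mstrat] unfolding f_def by blast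
  have lip: "norm (X s - X t0) \<le> C * norm (Y s - Y t0)" for s
    using Cl opt[of s] opt[of t0] by blast
  define \<Phi> where "\<Phi> b z = iter_partial [b] f z" for b z
  have kk: "\<Phi> b (X s) = Y s $ b - (Y s $ \<alpha> - \<Phi> \<alpha> (X s))" if "s \<in> I" "b \<in> S" for s b
    using kkt[OF U sm SA fr[OF that(1)] conjunct2[OF opt[of s]] that(2) al] unfolding \<Phi>_def by simp
  have exp_b: "\<exists>d>0. \<forall>w\<in>coord_subspace S. norm w < d \<longrightarrow>
      \<bar>\<Phi> b (z0 + w) - \<Phi> b z0 - (\<Sum>a\<in>S. w $ a * Hm a b)\<bar> \<le> e * norm w"
    if b: "b \<in> S" and e: "e > 0" for b e
  proof -
    have eqf: "\<And>a. iter_partial [a] (iter_partial [b] f) = iter_partial [a, b] f" by (rule ext) simp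
    have cont: "\<And>a. a \<in> S \<Longrightarrow> continuous_on (U \<inter> coord_subspace S) (iter_partial [a] (iter_partial [b] f))"
      unfolding eqf using sm b unfolding smooth_coords_on_def by (metis lists.Cons lists.Nil)
    have diff: "\<And>a q. a \<in> S \<Longrightarrow> q \<in> U \<inter> coord_subspace S \<Longrightarrow>
        (\<lambda>\<tau>. iter_partial [b] f (q + \<tau> *\<^sub>R axis a 1)) differentiable (at 0)"
      using sm b unfolding smooth_coords_on_def by (metis lists.Cons lists.Nil)
    from expansion[OF U(1) z0U z0c cont diff e] show ?thesis
      unfolding eqf \<Phi>_def Hm_def hess_def by blast
  qed
  have lim: "((\<lambda>s. (X s $ \<alpha> - X t0 $ \<alpha>) / (s - t0)) \<longlongrightarrow> D) (at t0)"
  proof (rule tendstoI)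
    fix \<epsilon> :: real assume \<epsilon>: "\<epsilon> > 0"
    define PA where "PA = (\<Sum>\<beta>\<in>S. \<bar>P \<beta>\<bar>)"
    define Lx where "Lx = C * (norm V + 1)"
    have PA0: "PA \<ge> 0" unfolding PA_def by (simp add: sum_nonneg)
    have Lx0: "Lx \<ge> 0" unfolding Lx_def using C by simp
    define e1 where "e1 = \<epsilon> / (4 * (PA + 1) * (Lx + 1))"
    define e2 where "e2 = \<epsilon> / (4 * (PA + 1))"
    have e1: "e1 > 0" unfolding e1_def using \<epsilon> PA0 Lx0 by simp
    have e2: "e2 > 0" unfolding e2_def using \<epsilon> PA0 by simp
    have ev1: "eventually (\<lambda>s. norm (Y s - Y t0 - (s - t0) *\<^sub>R V) \<le> e2 * \<bar>s - t0\<bar>) (at t0)"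
      by (rule vec_deriv_eventually[OF Yd e2])
    have ev2: "eventually (\<lambda>s. norm (Y s - Y t0 - (s - t0) *\<^sub>R V) \<le> 1 * \<bar>s - t0\<bar>) (at t0)"
      by (rule vec_deriv_eventually[OF Yd]) simp
    have ev3: "eventually (\<lambda>s. s \<in> I) (at t0)" using eventually_at_in_open'[OF I_open t0] .
    have ev4: "eventually (\<lambda>s. s \<noteq> t0) (at t0)" by (simp add: eventually_at_filter)
    have lipx: "norm (X s - z0) \<le> Lx * \<bar>s - t0\<bar>"
      if "norm (Y s - Y t0 - (s - t0) *\<^sub>R V) \<le> 1 * \<bar>s - t0\<bar>" for s
    proof -
      have "norm (Y s - Y t0) \<le> norm (Y s - Y t0 - (s - t0) *\<^sub>R V) + norm ((s - t0) *\<^sub>R V)"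
        using norm_triangle_ineq[of "Y s - Y t0 - (s - t0) *\<^sub>R V" "(s - t0) *\<^sub>R V"] by simp
      also have "\<dots> \<le> \<bar>s - t0\<bar> + \<bar>s - t0\<bar> * norm V" using that by simp
      finally have "norm (Y s - Y t0) \<le> (norm V + 1) * \<bar>s - t0\<bar>" by (simp add: algebra_simps)
      hence "C * norm (Y s - Y t0) \<le> C * ((norm V + 1) * \<bar>s - t0\<bar>)" using C by (rule mult_left_mono)
      thus ?thesis using lip[of s] Xt0 unfolding Lx_def by (simp add: mult.assoc)
    qed
    have ev5: "\<forall>b\<in>S. eventually (\<lambda>s. \<bar>\<Phi> b (X s) - \<Phi> b z0 - (\<Sum>a\<in>S. (X s - z0) $ a * Hm a b)\<bar>
                 \<le> e1 * norm (X s - z0)) (at t0)"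
    proof
      fix b assume b: "b \<in> S"
      obtain d where d: "d > 0" "\<forall>w\<in>coord_subspace S. norm w < d \<longrightarrow>
          \<bar>\<Phi> b (z0 + w) - \<Phi> b z0 - (\<Sum>a\<in>S. w $ a * Hm a b)\<bar> \<le> e1 * norm w"
        using exp_b[OF b e1] by blast
      have evd: "eventually (\<lambda>s. \<bar>s - t0\<bar> < d / (Lx + 1)) (at t0)"
        unfolding eventually_at using d Lx0
        by (intro exI[of _ "d / (Lx + 1)"]) (auto simp: dist_real_def)
      show "eventually (\<lambda>s. \<bar>\<Phi> b (X s) - \<Phi> b z0 - (\<Sum>a\<in>S. (X s - z0) $ a * Hm a b)\<bar>
                 \<le> e1 * norm (X s - z0)) (at t0)"
        using evd ev2 ev3
      proof eventually_elim
        case (elim s)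
        have "norm (X s - z0) \<le> Lx * \<bar>s - t0\<bar>" by (rule lipx[OF elim(2)])
        also have "\<dots> \<le> Lx * (d / (Lx + 1))" using elim(1) Lx0 by (intro mult_left_mono) auto
        also have "\<dots> < d" using d Lx0 by (simp add: field_simps)
        finally have nd: "norm (X s - z0) < d" .
        have wc: "X s - z0 \<in> coord_subspace S"
          using face_relint_cs[OF fr[OF elim(3)]] z0c by (simp add: coord_subspace_def)
        show ?case using d(2) wc nd by fastforce
      qed
    qed
    have ev5': "eventually (\<lambda>s. \<forall>b\<in>S. \<bar>\<Phi> b (X s) - \<Phi> b z0 - (\<Sum>a\<in>S. (X s - z0) $ a * Hm a b)\<bar>
                 \<le> e1 * norm (X s - z0)) (at t0)"
      by (rule eventually_ball_finite[OF _ ev5]) simp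
    show "eventually (\<lambda>s. dist ((X s $ \<alpha> - X t0 $ \<alpha>) / (s - t0)) D < \<epsilon>) (at t0)"
      using ev1 ev2 ev3 ev4 ev5'
    proof eventually_elim
      case (elim s)
      have sI: "s \<in> I" and sne: "s \<noteq> t0" using elim by auto
      define dx where "dx a = (X s - z0) $ a" for a
      define q where "q b = (\<Sum>a\<in>S. dx a * Hm a b)" for b
      define r where "r b = \<Phi> b (X s) - \<Phi> b z0 - q b" for b
      have rb: "\<bar>r b\<bar> \<le> e1 * norm (X s - z0)" if "b \<in> S" for b
        using elim(5) that unfolding r_def q_def dx_def by blast
      have dx0: "(\<Sum>a\<in>S. dx a) = 0"
      proof -
        have "(\<Sum>a\<in>S. X s $ a) = 1" "(\<Sum>a\<in>S. z0 $ a) = 1"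
          using fr[OF sI] z0fr by (auto simp: face_relint_def mstrat_def)
        thus ?thesis unfolding dx_def by (simp add: sum_subtractf)
      qed
      have AK: "dx \<alpha> = (\<Sum>\<beta>\<in>S. P \<beta> * q \<beta>)" "(\<Sum>\<beta>\<in>S. P \<beta>) = 0"
        using algebra_key[OF pd Hsym al dx0, of q] unfolding q_def P_def gv_def G_def by auto
      define lam where "lam = (Y s $ \<alpha> - \<Phi> \<alpha> (X s)) - (Y t0 $ \<alpha> - \<Phi> \<alpha> (X t0))"
      have qb: "q b = (Y s $ b - Y t0 $ b) - lam - r b" if "b \<in> S" for b
        using kk[OF sI that] kk[OF t0 that] Xt0 unfolding r_def lam_def by simp
      have "(\<Sum>\<beta>\<in>S. P \<beta> * q \<beta>) = (\<Sum>\<beta>\<in>S. P \<beta> * (Y s $ \<beta> - Y t0 $ \<beta>)) - lam * (\<Sum>\<beta>\<in>S. P \<beta>) - (\<Sum>\<beta>\<in>S. P \<beta> * r \<beta>)"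
        by (simp add: qb algebra_simps sum_subtractf sum_distrib_left sum.distrib cong: sum.cong)
      hence "dx \<alpha> - (s - t0) * D = (\<Sum>\<beta>\<in>S. P \<beta> * ((Y s - Y t0 - (s - t0) *\<^sub>R V) $ \<beta>)) - (\<Sum>\<beta>\<in>S. P \<beta> * r \<beta>)"
      proof -
        have "(\<Sum>\<beta>\<in>S. P \<beta> * ((Y s - Y t0 - (s - t0) *\<^sub>R V) $ \<beta>))
            = (\<Sum>\<beta>\<in>S. P \<beta> * (Y s $ \<beta> - Y t0 $ \<beta>) - (s - t0) * (P \<beta> * V $ \<beta>))"
          by (rule sum.cong) (simp_all add: algebra_simps)
        also have "\<dots> = (\<Sum>\<beta>\<in>S. P \<beta> * (Y s $ \<beta> - Y t0 $ \<beta>)) - (s - t0) * D"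
          unfolding D_def by (simp add: sum_subtractf sum_distrib_left)
        finally show ?thesis using AK \<open>(\<Sum>\<beta>\<in>S. P \<beta> * q \<beta>) = _\<close> by simp
      qed
      hence "\<bar>dx \<alpha> - (s - t0) * D\<bar> \<le> \<bar>\<Sum>\<beta>\<in>S. P \<beta> * ((Y s - Y t0 - (s - t0) *\<^sub>R V) $ \<beta>)\<bar> + \<bar>\<Sum>\<beta>\<in>S. P \<beta> * r \<beta>\<bar>"
        by linarith
      also have "\<dots> \<le> PA * (e2 * \<bar>s - t0\<bar>) + PA * (e1 * norm (X s - z0))"
      proof (rule add_mono)
        show "\<bar>\<Sum>\<beta>\<in>S. P \<beta> * ((Y s - Y t0 - (s - t0) *\<^sub>R V) $ \<beta>)\<bar> \<le> PA * (e2 * \<bar>s - t0\<bar>)"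
          unfolding PA_def
        proof (rule sum_bound)
          fix b show "\<bar>(Y s - Y t0 - (s - t0) *\<^sub>R V) $ b\<bar> \<le> e2 * \<bar>s - t0\<bar>"
            using component_le_norm_cart[of "Y s - Y t0 - (s - t0) *\<^sub>R V" b] elim(1) by linarith
        qed
        show "\<bar>\<Sum>\<beta>\<in>S. P \<beta> * r \<beta>\<bar> \<le> PA * (e1 * norm (X s - z0))"
          unfolding PA_def by (rule sum_bound) (rule rb)
      qed
      also have "\<dots> \<le> PA * (e2 * \<bar>s - t0\<bar>) + PA * (e1 * (Lx * \<bar>s - t0\<bar>))"
        using lipx[OF elim(2)] PA0 e1 by (intro add_left_mono mult_left_mono) auto
      also have "\<dots> = (PA * e2 + PA * e1 * Lx) * \<bar>s - t0\<bar>" by (simp add: algebra_simps)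
      also have "\<dots> \<le> (\<epsilon> / 2) * \<bar>s - t0\<bar>"
      proof (rule mult_right_mono)
        have "PA * e2 \<le> \<epsilon> / 4" unfolding e2_def using PA0 \<epsilon> by (simp add: field_simps)
        moreover have "PA * e1 * Lx \<le> \<epsilon> / 4"
        proof -
          define Q where "Q = (PA + 1) * (Lx + 1)"
          have Q: "Q > 0" unfolding Q_def using PA0 Lx0 by simp
          have "PA * Lx \<le> Q" unfolding Q_def using PA0 Lx0 by (simp add: algebra_simps)
          hence "(PA * Lx) * (\<epsilon> / (4 * Q)) \<le> Q * (\<epsilon> / (4 * Q))"
            using \<epsilon> Q by (intro mult_right_mono) auto
          also have "\<dots> = \<epsilon> / 4" using Q by simp
          moreover have "e1 = \<epsilon> / (4 * Q)" unfolding e1_def Q_def by (simp add: mult.assoc)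
          ultimately show ?thesis by (simp add: mult_ac)
        qed
        ultimately show "PA * e2 + PA * e1 * Lx \<le> \<epsilon> / 2" by simp
      qed simp
      finally have fin: "\<bar>dx \<alpha> - (s - t0) * D\<bar> \<le> \<epsilon> / 2 * \<bar>s - t0\<bar>" .
      have st: "\<bar>s - t0\<bar> > 0" using sne by simp
      have "dist ((X s $ \<alpha> - X t0 $ \<alpha>) / (s - t0)) D = \<bar>dx \<alpha> - (s - t0) * D\<bar> / \<bar>s - t0\<bar>"
      proof -
        have "(X s $ \<alpha> - X t0 $ \<alpha>) / (s - t0) - D = (dx \<alpha> - (s - t0) * D) / (s - t0)"
          unfolding dx_def using sne Xt0 by (simp add: diff_divide_distrib)
        thus ?thesis unfolding dist_real_def by (simp add: abs_divide)
      qed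
      also have "\<dots> \<le> \<epsilon> / 2" using fin st by (simp add: divide_le_eq)
      also have "\<dots> < \<epsilon>" using \<epsilon> by simp
      finally show ?case .
    qed
  qed
  hence "((\<lambda>s. X s $ \<alpha>) has_real_derivative D) (at t0)"
    by (simp add: has_field_derivative_iff)
  thus "((\<lambda>s. x s k $ \<alpha>) has_real_derivative
              (\<Sum>\<beta>\<in>supp (x t0 k).
                 (gmat (h k) (x t0 k) \<alpha> \<beta>
                   - gvec (h k) (x t0 k) \<alpha> * gvec (h k) (x t0 k) \<beta> / Gsum (h k) (x t0 k))
                 * payvec u A (x t0) k $ \<beta>)) (at t0)"
    unfolding goal_eq X_def .
qed


end
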